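(* Let $f:D\subset\mathbb{R}\times\mathbb{R}^3\to\mathbb{R}^3$ be a $C^3$ velocity field with $\operatorname{tr}\nabla f(t,x)\equiv 0$ (incompressible), let $t_0\in\mathbb{R}$, $T>0$, and let $x\in X(t_0)$ be a point whose solution exists on $[t_0,t_0+T]$. Let $N=\nabla\tilde f_T(x)$ be the mesochronic Jacobian, with characteristic polynomial $\lambda^3-t_{\tilde f}\lambda^2+m_{\tilde f}\lambda-d_{\tilde f}$, i.e. $t_{\tilde f}=\operatorname{tr}N$, $m_{\tilde f}=\operatorname{tr}\operatorname{cof}N$ (sum of the three principal $2\times2$ minors), $d_{\tilde f}=\det N$. Define $$\Sigma=\frac{d_{\tilde f}T^3}{8-2m_{\tilde f}T^2-3d_{\tilde f}T^3},$$ $$\Delta=-4d_{\tilde f}^4T^{12}-12d_{\tilde f}^3m_{\tilde f}T^{11}-13d_{\tilde f}^2m_{\tilde f}^2T^{10}-6d_{\tilde f}m_{\tilde f}^3T^9+(18d_{\tilde f}^2m_{\tilde f}-m_{\tilde f}^4)T^8+18d_{\tilde f}m_{\tilde f}^2T^7+(27d_{\tilde f}^2+4m_{\tilde f}^3)T^6.$$ Let $\mu_1,\mu_2,\mu_3$ be the eigenvalues (with multiplicity) of $\nabla\psi_T(x)$. Then: (i) If $8-2m_{\tilde f}T^2-3d_{\tilde f}T^3=0$, then $-1$ is an eigenvalue of $\nabla\psi_T(x)$, all three eigenvalues are real, and $x$ is non-mesohyperbolic. (ii) If $8-2m_{\tilde f}T^2-3d_{\tilde f}T^3\neq0$ (so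 $\Sigma$ is finite): if $\Sigma>0$, exactly two eigenvalues (counted with multiplicity) lie strictly inside the unit circle and one strictly outside; if $\Sigma<0$, exactly one lies strictly inside and two strictly outside; if $\Sigma=0$, then $1$ is an eigenvalue. (iii) If $\Delta<0$ the eigenvalues are real and distinct; if $\Delta>0$ there is one real eigenvalue and a pair of non-real complex-conjugate eigenvalues; if $\Delta=0$ all eigenvalues are real and (at least) two coincide. (iv) $x$ is mesohyperbolic on $[t_0,t_0+T]$ if and only if $d_{\tilde f}\neq0$ and $8-2m_{\tilde f}T^2-3d_{\tilde f}T^3\neq0$.
   Context: $\phi(t,t_0,x_0)$ denotes the solution of $\dot x=f(t,x)$ with $x(t_0)=x_0$. $X(t_0)\subset\mathbb{R}^3$ is an open set of initial values whose solutions exist on $[t_0,t_0+T]$. The time-$T$ map is $\psi_T(x)=\phi(t_0+T,t_0,x)$; by incompressibility $\det\nabla\psi_T\equiv1$. The mesochronic velocity is $\tilde f_T(x)=\frac1T\int_{t_0}^{t_0+T}f(\tau,\phi(\tau,t_0,x))\,d\tau$, so that $\psi_T(x)=x+T\tilde f_T(x)$ and $\nabla\psi_T(x)=\mathrm{Id}+T\nabla\tilde f_T(x)$; its Jacobian $\nabla\tilde f_T$ is the mesochronic Jacobian. A point $x$ is mesohyperbolic on $[t_0,t_0+T]$ if no eigenvalue of $\nabla\psi_T(x)$ has modulus $1$; otherwise it is non-mesohyperbolic. *)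

theory Defs
  imports "HOL-Analysis.Analysis" "HOL-Computational_Algebra.Polynomial"
begin

definition C1_on :: "('a::real_normed_vector \<Rightarrow> 'b::real_normed_vector) \<Rightarrow> 'a set \<Rightarrow> bool" where
  "C1_on f S \<longleftrightarrow> (\<exists>f'. (\<forall>x\<in>S. (f has_derivative blinfun_apply (f' x)) (at x)) \<and> continuous_on S f')"

definition C2_on :: "('a::real_normed_vector \<Rightarrow> 'b::real_normed_vector) \<Rightarrow> 'a set \<Rightarrow> bool" where
  "C2_on f S \<longleftrightarrow> (\<exists>f'. (\<forall>x\<in>S. (f has_derivative blinfun_apply (f' x)) (at x)) \<and> C1_on f' S)"

definition C3_on :: "('a::real_normed_vector \<Rightarrow> 'b::real_normed_vector) \<Rightarrow> 'a set \<Rightarrow> bool" where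
  "C3_on f S \<longleftrightarrow> (\<exists>f'. (\<forall>x\<in>S. (f has_derivative blinfun_apply (f' x)) (at x)) \<and> C2_on f' S)"

definition charpoly :: "real^3^3 \<Rightarrow> complex poly" where
  "charpoly A = det (\<chi> i j. (if i = j then [:0, 1:] else 0) - [: complex_of_real (A $ i $ j) :])"

definition cplx_eigenvalue :: "real^3^3 \<Rightarrow> complex \<Rightarrow> bool" where
  "cplx_eigenvalue A z \<longleftrightarrow> poly (charpoly A) z = 0"

definition mesohyperbolic :: "(real^3 \<Rightarrow> real^3) \<Rightarrow> real^3 \<Rightarrow> bool" where
  "mesohyperbolic psi x \<longleftrightarrow> (\<forall>z. cplx_eigenvalue (jacobian psi (at x)) z \<longrightarrow> cmod z \<noteq> 1)"

definition minor_sum :: "real^3^3 \<Rightarrow> real" where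
  "minor_sum N = N$1$1 * N$2$2 - N$1$2 * N$2$1 + N$1$1 * N$3$3 - N$1$3 * N$3$1
                + N$2$2 * N$3$3 - N$2$3 * N$3$2"

end

theory Submission
  imports Defs
begin

lemma real_count_pos:
  fixes r1 r2 r3 :: real
  assumes prod: "r1*r2*r3 = 1" and pos: "(r1^2-1)*(r2^2-1)*(r3^2-1) > 0"
  shows "length (filter (\<lambda>z. \<bar>z\<bar> < 1) [r1,r2,r3]) = 2 \<and> length (filter (\<lambda>z. \<bar>z\<bar> > 1) [r1,r2,r3]) = 1"
proof -
  have s: "r1^2*r2^2*r3^2 = 1" using prod by (metis power_mult_distrib power_one)
  have a: "r1^2 \<ge> 0" "r2^2 \<ge> 0" "r3^2 \<ge> 0" by auto
  have q: "\<bar>z\<bar> < 1 \<longleftrightarrow> z^2 < 1" "\<bar>z\<bar> > 1 \<longleftrightarrow> z^2 > 1" for z :: real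
    using abs_square_less_1[of z] abs_square_le_1[of z] by linarith+
  have ne: "r1^2 \<noteq> 1" "r2^2 \<noteq> 1" "r3^2 \<noteq> 1" using pos by auto
  define x y z where "x = r1^2" "y = r2^2" "z = r3^2"
  have xyz: "x*y*z = 1" "(x-1)*(y-1)*(z-1) > 0" "x \<ge> 0" "y\<ge>0" "z\<ge>0" "x\<noteq>1" "y\<noteq>1" "z\<noteq>1"
    using s pos a ne by (auto simp: x_y_z_def)
  have nall1: "\<not> (x > 1 \<and> y > 1 \<and> z > 1)"
  proof
    assume h: "x > 1 \<and> y > 1 \<and> z > 1"
    then have "x*y > 1" by (metis less_1_mult)
    then have "x*y*z > 1" using h by (metis less_1_mult)
    then show False using xyz by simp
  qed
  have "length (filter (\<lambda>v. v < 1) [x,y,z]) = 2 \<and> length (filter (\<lambda>v. v > 1) [x,y,z]) = 1"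
    using xyz nall1
    by (cases "x < 1"; cases "y < 1"; cases "z < 1") (auto simp: mult_less_0_iff zero_less_mult_iff)
  moreover have "[x,y,z] = map (\<lambda>v. v^2) [r1,r2,r3]" by (simp add: x_y_z_def)
  ultimately show ?thesis unfolding q by (simp only: filter_map length_map o_def)
qed

lemma real_count_neg:
  fixes r1 r2 r3 :: real
  assumes prod: "r1*r2*r3 = 1" and pos: "(r1^2-1)*(r2^2-1)*(r3^2-1) < 0"
  shows "length (filter (\<lambda>z. \<bar>z\<bar> < 1) [r1,r2,r3]) = 1 \<and> length (filter (\<lambda>z. \<bar>z\<bar> > 1) [r1,r2,r3]) = 2"
proof -
  have s: "r1^2*r2^2*r3^2 = 1" using prod by (metis power_mult_distrib power_one)
  have a: "r1^2 \<ge> 0" "r2^2 \<ge> 0" "r3^2 \<ge> 0" by auto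
  have q: "\<bar>z\<bar> < 1 \<longleftrightarrow> z^2 < 1" "\<bar>z\<bar> > 1 \<longleftrightarrow> z^2 > 1" for z :: real
    using abs_square_less_1[of z] abs_square_le_1[of z] by linarith+
  have ne: "r1^2 \<noteq> 1" "r2^2 \<noteq> 1" "r3^2 \<noteq> 1" using pos by auto
  define x y z where "x = r1^2" "y = r2^2" "z = r3^2"
  have xyz: "x*y*z = 1" "(x-1)*(y-1)*(z-1) < 0" "x \<ge> 0" "y\<ge>0" "z\<ge>0" "x\<noteq>1" "y\<noteq>1" "z\<noteq>1"
    using s pos a ne by (auto simp: x_y_z_def)
  have nall1: "\<not> (x < 1 \<and> y < 1 \<and> z < 1)"
  proof
    assume h: "x < 1 \<and> y < 1 \<and> z < 1"
    then have "x*y \<le> 1" using xyz by (intro mult_le_one) auto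
    then have "x*y*z \<le> 1 * z" using xyz by (intro mult_right_mono) auto
    then show False using xyz h by simp
  qed
  have "length (filter (\<lambda>v. v < 1) [x,y,z]) = 1 \<and> length (filter (\<lambda>v. v > 1) [x,y,z]) = 2"
    using xyz nall1
    by (cases "x < 1"; cases "y < 1"; cases "z < 1") (auto simp: mult_less_0_iff zero_less_mult_iff)
  moreover have "[x,y,z] = map (\<lambda>v. v^2) [r1,r2,r3]" by (simp add: x_y_z_def)
  ultimately show ?thesis unfolding q by (simp only: filter_map length_map o_def)
qed

lemma sym_ids:
  fixes a b c :: complex
  shows "(1-a)*(1-b)*(1-c) = 1 - (a+b+c) + (a*b+a*c+b*c) - a*b*c"
    "(-1-a)*(-1-b)*(-1-c) = -1 - (a+b+c) - (a*b+a*c+b*c) - a*b*c"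
  by (simp_all add: algebra_simps)
lemma disc_id:
  fixes a b c :: complex
  shows "((a-b)*(a-c)*(b-c))^2 = (a+b+c)^2*(a*b+a*c+b*c)^2 - 4*(a*b+a*c+b*c)^3 - 4*(a+b+c)^3*(a*b*c)
        + 18*(a+b+c)*(a*b+a*c+b*c)*(a*b*c) - 27*(a*b*c)^2"
  by (simp add: eval_nat_numeral ring_distribs algebra_simps)
lemma structure3:
  fixes mu1 mu2 mu3 :: complex
  assumes e1: "Im (mu1+mu2+mu3) = 0" and e2: "Im (mu1*mu2+mu1*mu3+mu2*mu3) = 0" and e3: "Im (mu1*mu2*mu3) = 0"
  shows "(Im mu1 = 0 \<and> Im mu2 = 0 \<and> Im mu3 = 0) \<or>
         (\<exists>r w. {#mu1,mu2,mu3#} = {#r, w, cnj w#} \<and> Im r = 0 \<and> Im w \<noteq> 0)"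
proof -
  define p where "p z = (z-mu1)*(z-mu2)*(z-mu3)" for z
  have pexp: "p z = z^3 - (mu1+mu2+mu3)*z^2 + (mu1*mu2+mu1*mu3+mu2*mu3)*z - mu1*mu2*mu3" for z
    unfolding p_def by (simp add: eval_nat_numeral algebra_simps)
  have cr: "cnj u = u" if "Im u = 0" for u using that by (simp add: complex_eq_iff)
  have pc: "p (cnj z) = cnj (p z)" for z
  proof -
    have "cnj (p z) = cnj z^3 - cnj (mu1+mu2+mu3)*cnj z^2 + cnj (mu1*mu2+mu1*mu3+mu2*mu3)*cnj z - cnj (mu1*mu2*mu3)"
      unfolding pexp by (simp only: complex_cnj_diff complex_cnj_add complex_cnj_mult complex_cnj_power)
    then show ?thesis unfolding pexp cr[OF e1] cr[OF e2] cr[OF e3] by simp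
  qed
  have root: "cnj mu = mu1 \<or> cnj mu = mu2 \<or> cnj mu = mu3" if "mu = mu1 \<or> mu = mu2 \<or> mu = mu3" for mu
  proof -
    have "p mu = 0" using that unfolding p_def by auto
    then have "p (cnj mu) = 0" using pc by simp
    then show ?thesis unfolding p_def by auto
  qed
  have sumre: "Im mu3 = - Im mu1 - Im mu2" using e1 by simp
  have cI: "Im (cnj u) = - Im u" for u by simp
  have nr: "cnj u \<noteq> u" if "Im u \<noteq> 0" for u using that by (auto simp: complex_eq_iff)
  have nr2: "cnj u \<noteq> v" if "Im u \<noteq> 0" "Im v = 0" for u v using that by (auto simp: complex_eq_iff)
  show ?thesis
  proof (cases "Im mu1 = 0")
    case True
    show ?thesis
    proof (cases "Im mu2 = 0")
      case True2: True
      show ?thesis using True True2 sumre by (intro disjI1) simp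
    next
      case False
      have "cnj mu2 = mu1 \<or> cnj mu2 = mu2 \<or> cnj mu2 = mu3" using root[of mu2] by blast
      moreover note nr[OF False] nr2[OF False True]
      ultimately have h: "mu3 = cnj mu2" by auto
      have "{#mu1,mu2,mu3#} = {#mu1,mu2,cnj mu2#}" using h by simp
      then show ?thesis using True False by (intro disjI2 exI[of _ mu1] exI[of _ mu2]) (intro conjI)
    qed
  next
    case False
    have "cnj mu1 = mu1 \<or> cnj mu1 = mu2 \<or> cnj mu1 = mu3" using root[of mu1] by blast
    moreover note nr[OF False]
    ultimately have "cnj mu1 = mu2 \<or> cnj mu1 = mu3" by auto
    then show ?thesis
    proof
      assume h: "cnj mu1 = mu2"
      have "Im mu2 = - Im mu1" using h cI[of mu1] by simp
      then have i3: "Im mu3 = 0" using sumre by simp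
      have "{#mu1,mu2,mu3#} = {#mu3, mu1, cnj mu1#}" using h by (simp add: add_mset_commute)
      then show ?thesis using False i3 by (intro disjI2 exI[of _ mu3] exI[of _ mu1]) (intro conjI)
    next
      assume h: "cnj mu1 = mu3"
      have "Im mu3 = - Im mu1" using h cI[of mu1] by simp
      then have i2: "Im mu2 = 0" using sumre by simp
      have "{#mu1,mu2,mu3#} = {#mu2, mu1, cnj mu1#}" using h by (simp add: add_mset_commute)
      then show ?thesis using False i2 by (intro disjI2 exI[of _ mu2] exI[of _ mu1]) (intro conjI)
    qed
  qed
qed
lemma charpoly_explicit:
  fixes J :: "real^3^3"
  shows "charpoly J = [: - complex_of_real (det J), complex_of_real (minor_sum J), - complex_of_real (trace J), 1 :]"
  unfolding charpoly_def det_3 minor_sum_def trace_def sum_3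
  by (simp add: algebra_simps)

lemma prod3_pCons:
  fixes a b c :: complex
  shows "[:-a,1:]*[:-b,1:]*[:-c,1:] = [: -(a*b*c), a*b+a*c+b*c, -(a+b+c), 1 :]"
  by (simp add: algebra_simps)

lemma JN_coeffs:
  fixes N :: "real^3^3" and T :: real
  assumes "J = mat 1 + T *\<^sub>R N"
  shows "trace J = 3 + T * trace N"
    "minor_sum J = 3 + 2*T*trace N + T^2 * minor_sum N"
    "det J = 1 + T * trace N + T^2 * minor_sum N + T^3 * det N"
  using assms unfolding trace_def sum_3 minor_sum_def det_3
  by (simp_all add: mat_def eval_nat_numeral algebra_simps)

lemma real_disc:
  fixes T m d :: real
  defines "A \<equiv> 3 + T*(-T*m - T^2*d)"
  defines "B \<equiv> 3 + 2*T*(-T*m - T^2*d) + T^2*m"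
  shows "A^2*B^2 - 4*B^3 - 4*A^3*1 + 18*A*B*1 - 27*1^2 =
    -(- 4 * d^4 * T^12 - 12 * d^3 * m * T^11 - 13 * d^2 * m^2 * T^10
                 - 6 * d * m^3 * T^9 + (18 * d^2 * m - m^4) * T^8 + 18 * d * m^2 * T^7
                 + (27 * d^2 + 4 * m^3) * T^6)"
  unfolding A_def B_def by (simp add: eval_nat_numeral algebra_simps)

lemma pair_case:
  fixes r w :: complex
  assumes r: "Im r = 0" and w: "Im w \<noteq> 0" and p: "r*w*cnj w = 1"
  shows "Re r * (cmod w)^2 = 1" "Re r > 0" "cmod r = Re r" "cmod (cnj w) = cmod w"
    "(1-r)*(1-w)*(1-cnj w) = of_real((1 - Re r)*(cmod (1-w))^2)" "cmod (1-w) > 0"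
    "(-1-r)*(-1-w)*(-1-cnj w) = of_real(-(1+Re r)*(cmod (1+w))^2)" "cmod (1+w) > 0"
    "((r-w)*(r-cnj w)*(w-cnj w))^2 = of_real(-4*(Im w)^2*(cmod (r-w))^4)" "cmod (r-w) > 0"
proof -
  have rr: "r = of_real (Re r)" using r by (simp add: complex_eq_iff)
  have wn: "w * cnj w = of_real ((cmod w)^2)" by (rule complex_norm_square[symmetric])
  have "of_real (Re r * (cmod w)^2) = (1::complex)" using p rr wn
    by (metis mult.assoc of_real_mult)
  then show e: "Re r * (cmod w)^2 = 1" using of_real_eq_1_iff by blast
  have "cmod w > 0" using w by auto
  then have "(cmod w)^2 > 0" by simp
  then show rp: "Re r > 0" using e by (metis zero_less_mult_pos2 zero_less_one)
  show "cmod r = Re r" using rr rp by (metis abs_of_pos norm_of_real)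
  show "cmod (cnj w) = cmod w" by simp
  have "(1-w)*(1-cnj w) = of_real ((cmod (1-w))^2)" using complex_norm_square[of "1-w"] by simp
  then show "(1-r)*(1-w)*(1-cnj w) = of_real((1 - Re r)*(cmod (1-w))^2)"
    by (subst rr) (simp add: mult.assoc)
  show "cmod (1-w) > 0" using w by (auto simp: complex_eq_iff)
  have "(-1-w)*(-1-cnj w) = of_real ((cmod (1+w))^2)"
    using complex_norm_square[of "1+w"] by (simp add: algebra_simps)
  then show "(-1-r)*(-1-w)*(-1-cnj w) = of_real(-(1+Re r)*(cmod (1+w))^2)"
    by (subst rr) (simp add: mult.assoc)
  show "cmod (1+w) > 0" using w by (auto simp: complex_eq_iff)
  have c1: "(r-w)*(r-cnj w) = of_real ((cmod (r-w))^2)"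
    using complex_norm_square[of "r-w"] r by (simp add: complex_eq_iff power2_eq_square)
  have c2: "(w - cnj w)^2 = of_real (-4 * (Im w)^2)"
    by (simp add: complex_eq_iff power2_eq_square)
  have "((r-w)*(r-cnj w)*(w-cnj w))^2 = ((r-w)*(r-cnj w))^2 * (w - cnj w)^2"
    by (simp add: power_mult_distrib)
  also have "\<dots> = of_real(-4*(Im w)^2*(cmod (r-w))^4)"
    unfolding c1 c2 by (simp add: power_mult_distrib)
  finally show "((r-w)*(r-cnj w)*(w-cnj w))^2 = of_real(-4*(Im w)^2*(cmod (r-w))^4)" .
  show "cmod (r-w) > 0" using w r by (auto simp: complex_eq_iff)
qed


lemma filter_len_mset: "length (filter P xs) = size (filter_mset P (mset xs))"
  by (metis mset_filter size_mset)

lemma alg_main: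
  fixes J N :: "real^3^3" and T m d Sg Delta :: real and mu1 mu2 mu3 :: complex
  assumes T_pos: "T > 0" and JN: "J = mat 1 + T *\<^sub>R N" and detJ: "det J = 1"
    and mu: "charpoly J = [:-mu1, 1:] * [:-mu2, 1:] * [:-mu3, 1:]"
    and m_def: "m = minor_sum N"
    and d_def: "d = det N"
    and Sg_def: "Sg = d * T^3 / (8 - 2 * m * T^2 - 3 * d * T^3)"
    and Delta_def: "Delta = - 4 * d^4 * T^12 - 12 * d^3 * m * T^11 - 13 * d^2 * m^2 * T^10
                 - 6 * d * m^3 * T^9 + (18 * d^2 * m - m^4) * T^8 + 18 * d * m^2 * T^7
                 + (27 * d^2 + 4 * m^3) * T^6"
  shows
    "(8 - 2 * m * T^2 - 3 * d * T^3 = 0 \<longrightarrow>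
        cplx_eigenvalue J (-1)
        \<and> Im mu1 = 0 \<and> Im mu2 = 0 \<and> Im mu3 = 0
        \<and> \<not> (\<forall>z. cplx_eigenvalue J z \<longrightarrow> cmod z \<noteq> 1))
   \<and> (8 - 2 * m * T^2 - 3 * d * T^3 \<noteq> 0 \<longrightarrow>
        (Sg > 0 \<longrightarrow> length (filter (\<lambda>z. cmod z < 1) [mu1, mu2, mu3]) = 2
                      \<and> length (filter (\<lambda>z. cmod z > 1) [mu1, mu2, mu3]) = 1)
      \<and> (Sg < 0 \<longrightarrow> length (filter (\<lambda>z. cmod z < 1) [mu1, mu2, mu3]) = 1
                      \<and> length (filter (\<lambda>z. cmod z > 1) [mu1, mu2, mu3]) = 2)
      \<and> (Sg = 0 \<longrightarrow> cplx_eigenvalue J 1))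
   \<and> (Delta < 0 \<longrightarrow> Im mu1 = 0 \<and> Im mu2 = 0 \<and> Im mu3 = 0
                    \<and> mu1 \<noteq> mu2 \<and> mu1 \<noteq> mu3 \<and> mu2 \<noteq> mu3)
   \<and> (Delta > 0 \<longrightarrow> (\<exists>r a b. {# r, a, b #} = {# mu1, mu2, mu3 #}
                    \<and> Im r = 0 \<and> Im a \<noteq> 0 \<and> b = cnj a))
   \<and> (Delta = 0 \<longrightarrow> Im mu1 = 0 \<and> Im mu2 = 0 \<and> Im mu3 = 0
                    \<and> (mu1 = mu2 \<or> mu1 = mu3 \<or> mu2 = mu3))
   \<and> ((\<forall>z. cplx_eigenvalue J z \<longrightarrow> cmod z \<noteq> 1) \<longleftrightarrow> d \<noteq> 0 \<and> 8 - 2 * m * T^2 - 3 * d * T^3 \<noteq> 0)"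
proof -
  define tN where "tN = trace N"
  define D0 where "D0 = 8 - 2 * m * T^2 - 3 * d * T^3"
  note cf = JN_coeffs[OF JN, folded tN_def m_def d_def]
  have "T * (tN + T*m + T^2*d) = 0" using cf(3) detJ by (simp add: algebra_simps eval_nat_numeral)
  then have tN: "tN = -T*m - T^2*d" using T_pos by simp
  define A where "A = 3 + T*(-T*m - T^2*d)"
  define B where "B = 3 + 2*T*(-T*m - T^2*d) + T^2*m"
  have trJ: "trace J = A" using cf(1) tN A_def by simp
  have msJ: "minor_sum J = B" using cf(2) tN B_def by simp
  have "[: - complex_of_real (det J), complex_of_real (minor_sum J), - complex_of_real (trace J), 1 :]
      = [: -(mu1*mu2*mu3), mu1*mu2+mu1*mu3+mu2*mu3, -(mu1+mu2+mu3), 1 :]"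
    using mu unfolding charpoly_explicit prod3_pCons by simp
  then have h3: "- complex_of_real (det J) = -(mu1*mu2*mu3)"
    and h2: "complex_of_real (minor_sum J) = mu1*mu2+mu1*mu3+mu2*mu3"
    and h1: "- complex_of_real (trace J) = -(mu1+mu2+mu3)" by simp_all
  have e3: "mu1*mu2*mu3 = 1" using h3 detJ by simp
  have e2: "mu1*mu2+mu1*mu3+mu2*mu3 = of_real B" using h2 msJ by simp
  have e1: "mu1+mu2+mu3 = of_real A" using h1 trJ by (metis minus_equation_iff)
  have eig: "cplx_eigenvalue J z \<longleftrightarrow> z = mu1 \<or> z = mu2 \<or> z = mu3" for z
  proof -
    have pl: "poly [:-a,1:] z = z - a" for a :: complex by simp
    show ?thesis unfolding cplx_eigenvalue_def mu poly_mult pl by simp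
  qed
  have P1: "(1-mu1)*(1-mu2)*(1-mu3) = of_real ((- (T^3*d)))"
  proof -
    have "(1-mu1)*(1-mu2)*(1-mu3) = of_real (1 - A + B - 1)"
      unfolding sym_ids(1) e1 e2 e3 by simp
    also have "1 - A + B - 1 = (- (T^3*d))" unfolding A_def B_def by (simp add: eval_nat_numeral algebra_simps)
    finally show ?thesis .
  qed
  have Pm: "(-1-mu1)*(-1-mu2)*(-1-mu3) = of_real (-D0)"
  proof -
    have "(-1-mu1)*(-1-mu2)*(-1-mu3) = of_real (-1 - A - B - 1)"
      unfolding sym_ids(2) e1 e2 e3 by simp
    also have "-1 - A - B - 1 = -D0" unfolding A_def B_def D0_def by (simp add: eval_nat_numeral algebra_simps)
    finally show ?thesis .
  qed
  have Disc: "((mu1-mu2)*(mu1-mu3)*(mu2-mu3))^2 = of_real (-Delta)"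
  proof -
    have "((mu1-mu2)*(mu1-mu3)*(mu2-mu3))^2 = of_real (A^2*B^2 - 4*B^3 - 4*A^3*1 + 18*A*B*1 - 27*1^2)"
      unfolding disc_id e1 e2 e3 by simp
    then show ?thesis unfolding real_disc Delta_def A_def B_def .
  qed
  have T3: "T^3 > 0" using T_pos by simp
  have Sg_alt: "Sg = ((- (T^3*d))) / (-D0)" unfolding Sg_def D0_def minus_divide_divide by (simp add: mult.commute)
  have dzero: "d = 0 \<longleftrightarrow> (- (T^3*d)) = 0" using T3 by simp
  have E1: "cplx_eigenvalue J 1" if "d = 0"
  proof -
    have "(1-mu1)*(1-mu2)*(1-mu3) = 0" using P1 that by simp
    then show ?thesis unfolding eig by auto
  qed
  have Em1: "cplx_eigenvalue J (-1)" if "D0 = 0"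
  proof -
    have "(-1-mu1)*(-1-mu2)*(-1-mu3) = 0" using Pm that by simp
    then have "-1 = mu1 \<or> -1 = mu2 \<or> -1 = mu3" by (simp only: mult_eq_0_iff right_minus_eq) blast
    then show ?thesis unfolding eig by auto
  qed
  have gen_Sg0: "Sg = 0 \<longrightarrow> cplx_eigenvalue J 1" if "D0 \<noteq> 0"
    using that E1 T_pos unfolding Sg_alt by auto
  have meso_fwd: "(\<forall>z. cplx_eigenvalue J z \<longrightarrow> cmod z \<noteq> 1) \<Longrightarrow> d \<noteq> 0 \<and> D0 \<noteq> 0"
    using E1 Em1 by fastforce
  have Ime: "Im (mu1+mu2+mu3) = 0" "Im (mu1*mu2+mu1*mu3+mu2*mu3) = 0" "Im (mu1*mu2*mu3) = 0"
    unfolding e1 e2 e3 by simp_all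
  from structure3[OF Ime] show ?thesis
  proof
    assume re: "Im mu1 = 0 \<and> Im mu2 = 0 \<and> Im mu3 = 0"
    define r1 r2 r3 where "r1 = Re mu1" "r2 = Re mu2" "r3 = Re mu3"
    have mr: "mu1 = of_real r1" "mu2 = of_real r2" "mu3 = of_real r3"
      using re by (simp_all add: r1_r2_r3_def complex_eq_iff)
    have rp: "r1*r2*r3 = 1" proof -
      have "complex_of_real (r1*r2*r3) = complex_of_real 1" using e3 unfolding mr by simp
      then show ?thesis using of_real_eq_iff by blast
    qed
    have rP1: "(1-r1)*(1-r2)*(1-r3) = (- (T^3*d))"
    proof -
      have "complex_of_real ((1-r1)*(1-r2)*(1-r3)) = complex_of_real (- (T^3*d))" using P1 unfolding mr by simp
      then show ?thesis using of_real_eq_iff by blast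
    qed
    have rPm: "(-1-r1)*(-1-r2)*(-1-r3) = -D0"
    proof -
      have "complex_of_real ((-1-r1)*(-1-r2)*(-1-r3)) = complex_of_real (-D0)" using Pm unfolding mr by simp
      then show ?thesis using of_real_eq_iff by blast
    qed
    have rDisc: "((r1-r2)*(r1-r3)*(r2-r3))^2 = -Delta"
    proof -
      have "complex_of_real (((r1-r2)*(r1-r3)*(r2-r3))^2) = complex_of_real (-Delta)" using Disc unfolding mr by simp
      then show ?thesis using of_real_eq_iff by blast
    qed
    have prodsq: "(r1^2-1)*(r2^2-1)*(r3^2-1) = ((1-r1)*(1-r2)*(1-r3)) * ((-1-r1)*(-1-r2)*(-1-r3))"
      by (simp add: eval_nat_numeral algebra_simps)
    have lenmap: "length (filter (\<lambda>z. P (cmod z)) [mu1,mu2,mu3]) = length (filter (\<lambda>z. P \<bar>z\<bar>) [r1,r2,r3])" for P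
      unfolding mr by simp
    have c1: "length (filter (\<lambda>z. cmod z < 1) [mu1,mu2,mu3]) = length (filter (\<lambda>z. \<bar>z\<bar> < 1) [r1,r2,r3])"
      using lenmap[of "\<lambda>x. x < 1"] by simp
    have c2: "length (filter (\<lambda>z. cmod z > 1) [mu1,mu2,mu3]) = length (filter (\<lambda>z. \<bar>z\<bar> > 1) [r1,r2,r3])"
      using lenmap[of "\<lambda>x. x > 1"] by simp
    have part2: "(Sg > 0 \<longrightarrow> length (filter (\<lambda>z. cmod z < 1) [mu1, mu2, mu3]) = 2
                      \<and> length (filter (\<lambda>z. cmod z > 1) [mu1, mu2, mu3]) = 1)
      \<and> (Sg < 0 \<longrightarrow> length (filter (\<lambda>z. cmod z < 1) [mu1, mu2, mu3]) = 1
                      \<and> length (filter (\<lambda>z. cmod z > 1) [mu1, mu2, mu3]) = 2)" if "D0 \<noteq> 0"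
    proof (intro conjI impI)
      assume "Sg > 0"
      then have "((- (T^3*d))) * (-D0) > 0" unfolding Sg_alt using that
        by (simp add: zero_less_divide_iff zero_less_mult_iff)
      then have "(r1^2-1)*(r2^2-1)*(r3^2-1) > 0" unfolding prodsq rP1 rPm .
      from real_count_pos[OF rp this] show "length (filter (\<lambda>z. cmod z < 1) [mu1, mu2, mu3]) = 2"
          "length (filter (\<lambda>z. cmod z > 1) [mu1, mu2, mu3]) = 1" unfolding c1 c2 by auto
    next
      assume "Sg < 0"
      then have "((- (T^3*d))) * (-D0) < 0" unfolding Sg_alt using that
        by (simp add: divide_less_0_iff mult_less_0_iff)
      then have "(r1^2-1)*(r2^2-1)*(r3^2-1) < 0" unfolding prodsq rP1 rPm .
      from real_count_neg[OF rp this] show "length (filter (\<lambda>z. cmod z < 1) [mu1, mu2, mu3]) = 1"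
          "length (filter (\<lambda>z. cmod z > 1) [mu1, mu2, mu3]) = 2" unfolding c1 c2 by auto
    qed
    have dpos: "Delta \<le> 0" using rDisc by (metis neg_0_le_iff_le zero_le_power2)
    have part3: "Delta < 0 \<longrightarrow> mu1 \<noteq> mu2 \<and> mu1 \<noteq> mu3 \<and> mu2 \<noteq> mu3"
    proof
      assume "Delta < 0"
      then have "(r1-r2)*(r1-r3)*(r2-r3) \<noteq> 0" using rDisc by auto
      then show "mu1 \<noteq> mu2 \<and> mu1 \<noteq> mu3 \<and> mu2 \<noteq> mu3" unfolding mr by auto
    qed
    have part5: "Delta = 0 \<longrightarrow> (mu1 = mu2 \<or> mu1 = mu3 \<or> mu2 = mu3)"
    proof
      assume "Delta = 0"
      then have "(r1-r2)*(r1-r3)*(r2-r3) = 0" using rDisc by simp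
      then show "mu1 = mu2 \<or> mu1 = mu3 \<or> mu2 = mu3" unfolding mr by auto
    qed
    have meso_bwd: "d \<noteq> 0 \<and> D0 \<noteq> 0 \<Longrightarrow> (\<forall>z. cplx_eigenvalue J z \<longrightarrow> cmod z \<noteq> 1)"
    proof (intro allI impI)
      fix z assume h: "d \<noteq> 0 \<and> D0 \<noteq> 0" and ez: "cplx_eigenvalue J z"
      have p1n: "(1-r1)*(1-r2)*(1-r3) \<noteq> 0" using h T3 rP1 by simp
      have pmn: "(-1-r1)*(-1-r2)*(-1-r3) \<noteq> 0" using h rPm by simp
      have "\<bar>r1\<bar> \<noteq> 1" "\<bar>r2\<bar> \<noteq> 1" "\<bar>r3\<bar> \<noteq> 1" using p1n pmn by (auto simp: abs_if split: if_splits)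
      then show "cmod z \<noteq> 1" using ez unfolding eig mr by auto
    qed
    show ?thesis
      unfolding D0_def[symmetric]
    proof (intro conjI)
      show "D0 = 0 \<longrightarrow> cplx_eigenvalue J (- 1) \<and> Im mu1 = 0 \<and> Im mu2 = 0 \<and> Im mu3 = 0 \<and>
        \<not> (\<forall>z. cplx_eigenvalue J z \<longrightarrow> cmod z \<noteq> 1)"
        using Em1 re by fastforce
      show "D0 \<noteq> 0 \<longrightarrow> (0 < Sg \<longrightarrow> length (filter (\<lambda>z. cmod z < 1) [mu1, mu2, mu3]) = 2 \<and>
                      length (filter (\<lambda>z. 1 < cmod z) [mu1, mu2, mu3]) = 1) \<and>
       (Sg < 0 \<longrightarrow> length (filter (\<lambda>z. cmod z < 1) [mu1, mu2, mu3]) = 1 \<and>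
                 length (filter (\<lambda>z. 1 < cmod z) [mu1, mu2, mu3]) = 2) \<and>
       (Sg = 0 \<longrightarrow> cplx_eigenvalue J 1)"
        using part2 gen_Sg0 by blast
      show "Delta < 0 \<longrightarrow> Im mu1 = 0 \<and> Im mu2 = 0 \<and> Im mu3 = 0 \<and> mu1 \<noteq> mu2 \<and> mu1 \<noteq> mu3 \<and> mu2 \<noteq> mu3"
        using re part3 by blast
      show "0 < Delta \<longrightarrow> (\<exists>r a b. {#r, a, b#} = {#mu1, mu2, mu3#} \<and> Im r = 0 \<and> Im a \<noteq> 0 \<and> b = cnj a)"
        using dpos by simp
      show "Delta = 0 \<longrightarrow> Im mu1 = 0 \<and> Im mu2 = 0 \<and> Im mu3 = 0 \<and> (mu1 = mu2 \<or> mu1 = mu3 \<or> mu2 = mu3)"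
        using re part5 by blast
      show "(\<forall>z. cplx_eigenvalue J z \<longrightarrow> cmod z \<noteq> 1) = (d \<noteq> 0 \<and> D0 \<noteq> 0)"
        using meso_fwd meso_bwd by blast
    qed
  next
    assume "\<exists>r w. {#mu1,mu2,mu3#} = {#r, w, cnj w#} \<and> Im r = 0 \<and> Im w \<noteq> 0"
    then obtain r w where M: "{#mu1,mu2,mu3#} = {#r, w, cnj w#}" and r: "Im r = 0" and w: "Im w \<noteq> 0" by blast
    have polyeq: "(z-mu1)*(z-mu2)*(z-mu3) = (z-r)*(z-w)*(z-cnj w)" for z
    proof -
      have "prod_mset (image_mset (\<lambda>u. z - u) {#mu1,mu2,mu3#}) = prod_mset (image_mset (\<lambda>u. z - u) {#r, w, cnj w#})"
        using M by simp
      then show ?thesis by (simp add: mult.assoc)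
    qed
    have se1: "mu1+mu2+mu3 = r+w+cnj w"
    proof -
      have "sum_mset {#mu1,mu2,mu3#} = sum_mset {#r, w, cnj w#}" using M by simp
      then show ?thesis by (simp add: add.assoc)
    qed
    have se3: "mu1*mu2*mu3 = r*w*cnj w"
    proof -
      have "prod_mset {#mu1,mu2,mu3#} = prod_mset {#r, w, cnj w#}" using M by simp
      then show ?thesis by (simp add: mult.assoc)
    qed
    have se2: "mu1*mu2+mu1*mu3+mu2*mu3 = r*w+r*cnj w+w*cnj w"
    proof -
      have "1 - (mu1+mu2+mu3) + (mu1*mu2+mu1*mu3+mu2*mu3) - mu1*mu2*mu3 = 1 - (r+w+cnj w) + (r*w+r*cnj w+w*cnj w) - r*w*cnj w"
        using polyeq[of 1] unfolding sym_ids(1) .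
      then show ?thesis unfolding se1 se3 by (simp add: add.assoc)
    qed
    have rw1: "r*w*cnj w = 1" using se3 e3 by simp
    note pc = pair_case[OF r w rw1]
    have wP1: "of_real ((1 - Re r)*(cmod (1-w))^2) = (complex_of_real ((- (T^3*d))))"
      using P1 polyeq[of 1] pc(5) by simp
    then have wP1r: "(1 - Re r)*(cmod (1-w))^2 = (- (T^3*d))" using of_real_eq_iff by blast
    have wPm: "of_real (-(1+Re r)*(cmod (1+w))^2) = (complex_of_real (-D0))"
      using Pm polyeq[of "-1"] pc(7) by simp
    then have wPmr: "-(1+Re r)*(cmod (1+w))^2 = -D0" using of_real_eq_iff by blast
    have D0pos: "D0 > 0"
    proof -
      have "(1+Re r)*(cmod (1+w))^2 > 0" using pc(2) pc(8) by simp
      moreover have "(1+Re r)*(cmod (1+w))^2 = D0" using wPmr by (simp add: algebra_simps)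
      ultimately show ?thesis by simp
    qed
    have wDisc: "of_real (-4*(Im w)^2*(cmod (r-w))^4) = (complex_of_real (-Delta))"
    proof -
      have "((mu1-mu2)*(mu1-mu3)*(mu2-mu3))^2 = ((r-w)*(r-cnj w)*(w-cnj w))^2"
        unfolding disc_id se1 se2 se3 ..
      then show ?thesis using Disc pc(9) by simp
    qed
    then have "-4*(Im w)^2*(cmod (r-w))^4 = -Delta" using of_real_eq_iff by blast
    moreover have "(Im w)^2*(cmod (r-w))^4 > 0" using w pc(10) by simp
    ultimately have Dpos: "Delta > 0" by simp
    have Mlen: "length (filter P [mu1,mu2,mu3]) = size (filter_mset P {#r, w, cnj w#})" for P
      unfolding filter_len_mset using M by simp
    have wnz: "w \<noteq> 0" proof assume "w = 0" then show False using w by simp qed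
    have cpos: "(cmod w)^2 > 0" using wnz by simp
    have rinv: "Re r = 1 / (cmod w)^2" using pc(1) cpos by (simp add: field_simps)
    have q: "(cmod w)^2 < 1 \<longleftrightarrow> Re r > 1" "(cmod w)^2 > 1 \<longleftrightarrow> Re r < 1"
      unfolding rinv using cpos by (simp_all add: less_divide_eq_1_pos divide_less_eq_1_pos)
    have q2: "cmod w < 1 \<longleftrightarrow> (cmod w)^2 < 1" "cmod w > 1 \<longleftrightarrow> (cmod w)^2 > 1"
      using abs_square_less_1[of "cmod w"] abs_square_le_1[of "cmod w"] by simp_all linarith
    have a1: "(cmod (1-w))^2 > 0" using pc(6) by simp
    have a2: "(cmod (1+w))^2 > 0" using pc(8) by simp
    have Sgv: "Sg = (Re r - 1)*(cmod (1-w))^2 / D0" unfolding Sg_alt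
      using wP1r by (simp add: algebra_simps)
    have part2: "(Sg > 0 \<longrightarrow> length (filter (\<lambda>z. cmod z < 1) [mu1, mu2, mu3]) = 2
                      \<and> length (filter (\<lambda>z. cmod z > 1) [mu1, mu2, mu3]) = 1)
      \<and> (Sg < 0 \<longrightarrow> length (filter (\<lambda>z. cmod z < 1) [mu1, mu2, mu3]) = 1
                      \<and> length (filter (\<lambda>z. cmod z > 1) [mu1, mu2, mu3]) = 2)"
    proof (intro conjI impI)
      assume "Sg > 0"
      then have "Re r > 1" unfolding Sgv using D0pos a1 by (simp add: zero_less_divide_iff zero_less_mult_iff)
      then have "cmod w < 1" "cmod r > 1" using q q2 pc(3) by auto
      then show "length (filter (\<lambda>z. cmod z < 1) [mu1, mu2, mu3]) = 2"
          "length (filter (\<lambda>z. cmod z > 1) [mu1, mu2, mu3]) = 1" unfolding Mlen by auto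
    next
      assume "Sg < 0"
      then have "Re r < 1" unfolding Sgv using D0pos a1 by (simp add: divide_less_0_iff mult_less_0_iff)
      then have "cmod w > 1" "cmod r < 1" using q q2 pc(2) pc(3) by auto
      then show "length (filter (\<lambda>z. cmod z < 1) [mu1, mu2, mu3]) = 1"
          "length (filter (\<lambda>z. cmod z > 1) [mu1, mu2, mu3]) = 2" unfolding Mlen by auto
    qed
    have eig2: "cplx_eigenvalue J z \<longleftrightarrow> z = r \<or> z = w \<or> z = cnj w" for z
    proof -
      have "z \<in># {#mu1,mu2,mu3#} \<longleftrightarrow> z \<in># {#r, w, cnj w#}" using M by simp
      then show ?thesis unfolding eig by simp
    qed
    have meso_bwd: "d \<noteq> 0 \<and> D0 \<noteq> 0 \<Longrightarrow> (\<forall>z. cplx_eigenvalue J z \<longrightarrow> cmod z \<noteq> 1)"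
    proof (intro allI impI)
      fix z assume h: "d \<noteq> 0 \<and> D0 \<noteq> 0" and ez: "cplx_eigenvalue J z"
      have "Re r \<noteq> 1" using wP1r h T3 by auto
      then have "cmod r \<noteq> 1" "cmod w \<noteq> 1" using pc(1) pc(3) by auto
      then show "cmod z \<noteq> 1" using ez unfolding eig2 by auto
    qed
    have part4: "\<exists>r a b. {# r, a, b #} = {# mu1, mu2, mu3 #} \<and> Im r = 0 \<and> Im a \<noteq> 0 \<and> b = cnj a"
      using M r w by (intro exI[of _ r] exI[of _ w] exI[of _ "cnj w"]) simp
    show ?thesis
      unfolding D0_def[symmetric]
    proof (intro conjI)
      show "D0 = 0 \<longrightarrow> cplx_eigenvalue J (- 1) \<and> Im mu1 = 0 \<and> Im mu2 = 0 \<and> Im mu3 = 0 \<and>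
        \<not> (\<forall>z. cplx_eigenvalue J z \<longrightarrow> cmod z \<noteq> 1)"
        using D0pos by simp
      show "D0 \<noteq> 0 \<longrightarrow> (0 < Sg \<longrightarrow> length (filter (\<lambda>z. cmod z < 1) [mu1, mu2, mu3]) = 2 \<and>
                      length (filter (\<lambda>z. 1 < cmod z) [mu1, mu2, mu3]) = 1) \<and>
       (Sg < 0 \<longrightarrow> length (filter (\<lambda>z. cmod z < 1) [mu1, mu2, mu3]) = 1 \<and>
                 length (filter (\<lambda>z. 1 < cmod z) [mu1, mu2, mu3]) = 2) \<and>
       (Sg = 0 \<longrightarrow> cplx_eigenvalue J 1)"
        using part2 gen_Sg0 by blast
      show "Delta < 0 \<longrightarrow> Im mu1 = 0 \<and> Im mu2 = 0 \<and> Im mu3 = 0 \<and> mu1 \<noteq> mu2 \<and> mu1 \<noteq> mu3 \<and> mu2 \<noteq> mu3"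
        using Dpos by simp
      show "0 < Delta \<longrightarrow> (\<exists>r a b. {#r, a, b#} = {#mu1, mu2, mu3#} \<and> Im r = 0 \<and> Im a \<noteq> 0 \<and> b = cnj a)"
        using part4 by blast
      show "Delta = 0 \<longrightarrow> Im mu1 = 0 \<and> Im mu2 = 0 \<and> Im mu3 = 0 \<and> (mu1 = mu2 \<or> mu1 = mu3 \<or> mu2 = mu3)"
        using Dpos by simp
      show "(\<forall>z. cplx_eigenvalue J z \<longrightarrow> cmod z \<noteq> 1) = (d \<noteq> 0 \<and> D0 \<noteq> 0)"
        using meso_fwd meso_bwd by blast
    qed
  qed
qed


lemma gronwall:
  fixes g :: "real \<Rightarrow> real" and a b c L :: real
  assumes cont: "continuous_on {a..b} g" and L: "L > 0"
    and ineq: "\<And>t. t \<in> {a..b} \<Longrightarrow> g t \<le> c + L * integral {a..t} g"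
    and t: "t \<in> {a..b}"
  shows "g t \<le> c * exp (L * (t - a))"
proof -
  define G where "G s = integral {a..s} g" for s
  define K where "K s = exp (- L * (s - a)) * (c + L * G s)" for s
  have intg: "g integrable_on {a..b}" using cont by (rule integrable_continuous_real)
  have Gc: "continuous_on {a..b} G" unfolding G_def using indefinite_integral_continuous_1[OF intg] .
  have Gd: "(G has_real_derivative g s) (at s within {a..b})" if "s \<in> {a..b}" for s
    using integral_has_vector_derivative[OF cont that] unfolding G_def has_real_derivative_iff_has_vector_derivative .
  have Kc: "continuous_on {a..t} K" unfolding K_def
    using t by (intro continuous_intros continuous_on_subset[OF Gc]) auto
  have "K t \<le> K a"
  proof (rule DERIV_nonpos_imp_decreasing_open[of a t K])
    show "a \<le> t" using t by simp
    show "continuous_on {a..t} K" by fact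
    fix s assume s: "a < s" "s < t"
    have "(G has_real_derivative g s) (at s within {a..b})" using s t by (intro Gd) auto
    then have "(G has_real_derivative g s) (at s)" using s t by (simp add: at_within_Icc_at)
    then have "(K has_real_derivative (exp (- L * (s - a)) * (- L) * (c + L * G s) + exp (- L * (s - a)) * (L * g s))) (at s)"
      unfolding K_def by (auto intro!: derivative_eq_intros)
    moreover have "exp (- L * (s - a)) * (- L) * (c + L * G s) + exp (- L * (s - a)) * (L * g s)
        = exp (- L * (s - a)) * L * (g s - (c + L * G s))" by (simp add: algebra_simps)
    moreover have "g s - (c + L * G s) \<le> 0" using ineq[of s] s t unfolding G_def by auto
    then have "exp (- L * (s - a)) * L * (g s - (c + L * G s)) \<le> 0"
      using L by (simp add: mult_nonneg_nonpos)
    ultimately show "\<exists>y. (K has_real_derivative y) (at s) \<and> y \<le> 0" by auto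
  qed
  moreover have Ga: "G a = 0" unfolding G_def by simp
  ultimately have "exp (- L * (t - a)) * (c + L * G t) \<le> c" unfolding K_def by simp
  then have "(exp (- L * (t - a)) * (c + L * G t)) * exp (L * (t - a)) \<le> c * exp (L * (t - a))"
    by (intro mult_right_mono) auto
  moreover have "exp (- L * (t - a)) * exp (L * (t - a)) = 1" by (simp add: exp_add[symmetric])
  ultimately have "c + L * G t \<le> c * exp (L * (t - a))"
    by (metis (no_types, lifting) mult.assoc mult.commute mult.right_neutral)
  then show ?thesis using ineq[OF t] unfolding G_def by simp
qed


locale flowsetup =
  fixes f :: "real \<Rightarrow> real^3 \<Rightarrow> real^3"
    and D :: "(real \<times> (real^3)) set"
    and phi :: "real \<Rightarrow> real \<Rightarrow> real^3 \<Rightarrow> real^3"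
    and X :: "(real^3) set"
    and t0 T :: real and x :: "real^3"
    and F' :: "(real \<times> (real^3)) \<Rightarrow> ((real \<times> (real^3)) \<Rightarrow>\<^sub>L (real^3))"
  assumes D_open: "open D"
    and F'_deriv: "\<And>p. p \<in> D \<Longrightarrow> ((\<lambda>(t, y). f t y) has_derivative blinfun_apply (F' p)) (at p)"
    and F'_cont: "continuous_on D F'"
    and T_pos: "T > 0"
    and X_open: "open X"
    and sol_init: "\<forall>y\<in>X. phi t0 t0 y = y"
    and sol_dom: "\<forall>y\<in>X. \<forall>\<tau>\<in>{t0..t0+T}. (\<tau>, phi \<tau> t0 y) \<in> D"
    and sol_ode: "\<forall>y\<in>X. \<forall>\<tau>\<in>{t0..t0+T}.
          ((\<lambda>s. phi s t0 y) has_vector_derivative f \<tau> (phi \<tau> t0 y)) (at \<tau> within {t0..t0+T})"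
    and x_in: "x \<in> X"
begin

abbreviation "I \<equiv> {t0..t0+T}"
definition gam :: "real^3 \<Rightarrow> real \<Rightarrow> real^3" where "gam y s = phi s t0 y"

lemma f_pd:
  assumes "(s, z) \<in> D"
  shows "(f s has_derivative (\<lambda>v. F' (s, z) (0, v))) (at z)"
proof -
  have 1: "((\<lambda>z. (s, z)) has_derivative (\<lambda>v. (0, v))) (at z)"
    by (auto intro!: derivative_eq_intros)
  have 2: "((\<lambda>(t, y). f t y) has_derivative blinfun_apply (F' (s, z))) (at (s, z))"
    using F'_deriv[OF assms] .
  from has_derivative_compose[OF 1 2] show ?thesis by simp
qed

lemma g_cont: "continuous_on D (\<lambda>(t, y). f t y)"
  using F'_deriv by (meson continuous_at_imp_continuous_on has_derivative_continuous)

lemma gam_cont: "y \<in> X \<Longrightarrow> continuous_on I (gam y)"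
  unfolding gam_def using sol_ode by (intro continuous_on_vector_derivative[where f'="\<lambda>\<tau>. f \<tau> (phi \<tau> t0 y)"]) auto

lemma integrand_cont: "y \<in> X \<Longrightarrow> continuous_on I (\<lambda>s. f s (gam y s))"
proof -
  assume y: "y \<in> X"
  have "continuous_on I (\<lambda>s. (s, gam y s))" using gam_cont[OF y] by (intro continuous_intros)
  moreover have "(\<lambda>s. (s, gam y s)) ` I \<subseteq> D" using sol_dom y by (auto simp: gam_def)
  ultimately have "continuous_on I ((\<lambda>(t, y). f t y) \<circ> (\<lambda>s. (s, gam y s)))"
    using continuous_on_subset[OF g_cont] continuous_on_compose by blast
  then show ?thesis by (simp add: o_def)
qed

lemma int_eq:
  assumes y: "y \<in> X" and tau: "\<tau> \<in> I"
  shows "gam y \<tau> = y + integral {t0..\<tau>} (\<lambda>s. f s (gam y s))"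
proof -
  have "((\<lambda>s. f s (gam y s)) has_integral (gam y \<tau> - gam y t0)) {t0..\<tau>}"
  proof (rule fundamental_theorem_of_calculus)
    show "t0 \<le> \<tau>" using tau by simp
    fix s assume s: "s \<in> {t0..\<tau>}"
    then have "s \<in> I" using tau by auto
    then have "(gam y has_vector_derivative f s (gam y s)) (at s within I)"
      using sol_ode y unfolding gam_def by auto
    then show "(gam y has_vector_derivative f s (gam y s)) (at s within {t0..\<tau>})"
      by (rule has_vector_derivative_within_subset) (use tau in auto)
  qed
  moreover have "gam y t0 = y" using sol_init y by (simp add: gam_def)
  ultimately show ?thesis by (simp add: integral_unique)
qed

lemma tube_exists: "\<exists>r>0. \<forall>s\<in>I. \<forall>z. dist z (gam x s) \<le> r \<longrightarrow> (s, z) \<in> D"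
proof -
  have "compact ((\<lambda>s. (s, gam x s)) ` I)"
    using gam_cont[OF x_in] by (intro compact_continuous_image continuous_intros) auto
  moreover have "(\<lambda>s. (s, gam x s)) ` I \<subseteq> D" using sol_dom x_in by (auto simp: gam_def)
  ultimately obtain e where e: "e > 0" "(\<Union>p\<in>(\<lambda>s. (s, gam x s)) ` I. cball p e) \<subseteq> D"
    using compact_subset_open_imp_cball_epsilon_subset D_open by metis
  have "(s, z) \<in> D" if "s \<in> I" "dist z (gam x s) \<le> e" for s z
  proof -
    have "(s, z) \<in> cball (s, gam x s) e" using that by (simp add: dist_Pair_Pair dist_commute)
    then show ?thesis using e that by blast
  qed
  then show ?thesis using e by blast
qed

end


lemma poly_int_bound:
  fixes a t L c :: real and k :: nat
  assumes "a \<le> t"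
  shows "((\<lambda>s. c * L * (L * (s - a))^k / fact k) has_integral (c * (L * (t - a))^(Suc k) / fact (Suc k))) {a..t}"
proof -
  have "((\<lambda>s. c * L * (L * (s - a))^k / fact k) has_integral
         (c * (L * (t - a))^(Suc k) / fact (Suc k) - c * (L * (a - a))^(Suc k) / fact (Suc k))) {a..t}"
  proof (rule fundamental_theorem_of_calculus)
    show "a \<le> t" by fact
    fix s assume "s \<in> {a..t}"
    have pw: "((\<lambda>s. (L * (s - a))^n) has_real_derivative (real n * (L * (s - a))^(n - 1) * L)) (at s within {a..t})" for n
      by (auto intro!: derivative_eq_intros)
    have "((\<lambda>s. c * (L * (s - a))^(Suc k) / fact (Suc k)) has_real_derivative
           c * (real (Suc k) * (L * (s - a))^k * L) / fact (Suc k)) (at s within {a..t})"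
      using DERIV_cdivide[OF DERIV_cmult[OF pw[of "Suc k", unfolded diff_Suc_1]], of c "fact (Suc k)"] by simp
    moreover have "c * (real (Suc k) * (L * (s - a))^k * L) / fact (Suc k) = c * L * (L * (s - a))^k / fact k"
    proof -
      have "c * (real (Suc k) * (L * (s - a))^k * L) / fact (Suc k)
          = real (Suc k) * (c * L * (L * (s - a))^k) / (real (Suc k) * fact k)"
        by (simp only: fact_Suc of_nat_mult mult_ac)
      also have "\<dots> = c * L * (L * (s - a))^k / fact k"
        by (rule mult_divide_mult_cancel_left) simp
      finally show ?thesis .
    qed
    ultimately show "((\<lambda>s. c * (L * (s - a))^(Suc k) / fact (Suc k)) has_vector_derivative
           c * L * (L * (s - a))^k / fact k) (at s within {a..t})"
      by (simp add: has_real_derivative_iff_has_vector_derivative mult_ac)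
  qed
  then show ?thesis by simp
qed

lemma lin_ode:
  fixes B :: "real \<Rightarrow> real^3 \<Rightarrow> real^3" and a b L :: real and v :: "real^3"
  assumes ab: "a \<le> b" and L: "L \<ge> 0"
    and lin: "\<And>s. linear (B s)"
    and bnd: "\<And>s w. s \<in> {a..b} \<Longrightarrow> norm (B s w) \<le> L * norm w"
    and cont: "\<And>u. continuous_on {a..b} u \<Longrightarrow> continuous_on {a..b} (\<lambda>s. B s (u s))"
  shows "\<exists>u. continuous_on {a..b} u \<and> (\<forall>\<tau>\<in>{a..b}. u \<tau> = v + integral {a..\<tau>} (\<lambda>s. B s (u s)))"
proof -
  define P where "P = rec_nat (\<lambda>s. v) (\<lambda>k p \<tau>. integral {a..\<tau>} (\<lambda>s. B s (p s)))"
  have P0: "P 0 = (\<lambda>s. v)" and PS: "P (Suc k) = (\<lambda>\<tau>. integral {a..\<tau>} (\<lambda>s. B s (P k s)))" for k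
    by (simp_all add: P_def)
  have PP: "continuous_on {a..b} (P k) \<and> (\<forall>\<tau>\<in>{a..b}. norm (P k \<tau>) \<le> norm v * (L*(\<tau>-a))^k / fact k)" for k
  proof (induction k)
    case 0 then show ?case by (simp add: P0)
  next
    case (Suc k)
    have c: "continuous_on {a..b} (\<lambda>s. B s (P k s))" using Suc.IH cont by blast
    have ci: "continuous_on {a..b} (P (Suc k))" unfolding PS
      by (rule indefinite_integral_continuous_1[OF integrable_continuous_real[OF c]])
    have "norm (P (Suc k) \<tau>) \<le> norm v * (L*(\<tau>-a))^(Suc k) / fact (Suc k)" if \<tau>: "\<tau>\<in>{a..b}" for \<tau>
    proof -
      have sub: "{a..\<tau>} \<subseteq> {a..b}" using \<tau> by auto
      have "norm (integral {a..\<tau>} (\<lambda>s. B s (P k s))) \<le> integral {a..\<tau>} (\<lambda>s. norm v * L * (L*(s-a))^k / fact k)"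
      proof (rule integral_norm_bound_integral)
        show "(\<lambda>s. B s (P k s)) integrable_on {a..\<tau>}"
          using integrable_continuous_real[OF continuous_on_subset[OF c sub]] by simp
        show "(\<lambda>s. norm v * L * (L*(s-a))^k / fact k) integrable_on {a..\<tau>}"
          using poly_int_bound[of a \<tau> "norm v" L k] \<tau> by (auto intro: has_integral_integrable)
        fix s assume s: "s \<in> {a..\<tau>}"
        have "norm (B s (P k s)) \<le> L * norm (P k s)" using bnd s sub by auto
        also have "\<dots> \<le> L * (norm v * (L*(s-a))^k / fact k)" using Suc.IH s sub L by (intro mult_left_mono) auto
        finally show "norm (B s (P k s)) \<le> norm v * L * (L*(s-a))^k / fact k" by (simp add: mult_ac)
      qed
      also have "\<dots> = norm v * (L*(\<tau>-a))^(Suc k) / fact (Suc k)"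
        using \<tau> by (intro integral_unique poly_int_bound) simp
      finally show ?thesis unfolding PS .
    qed
    then show ?case using ci by blast
  qed
  define M where "M k = norm v * (L*(b-a))^k / fact k" for k
  have Mb: "norm (P k \<tau>) \<le> M k" if "\<tau> \<in> {a..b}" for k \<tau>
  proof -
    have "norm (P k \<tau>) \<le> norm v * (L*(\<tau>-a))^k / fact k" using PP that by blast
    also have "\<dots> \<le> M k" unfolding M_def using that L
      by (intro divide_right_mono mult_left_mono power_mono mult_left_mono) auto
    finally show ?thesis .
  qed
  have Ms: "summable M" unfolding M_def
    using summable_mult[OF summable_exp[of "L*(b-a)"], of "norm v"] by (simp add: divide_inverse mult_ac)
  define u where "u \<tau> = (\<Sum>i. P i \<tau>)" for \<tau>
  have ul: "uniform_limit {a..b} (\<lambda>n \<tau>. \<Sum>i<n. P i \<tau>) u sequentially"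
    unfolding u_def by (rule Weierstrass_m_test[OF Mb Ms])
  have Sc: "continuous_on {a..b} (\<lambda>\<tau>. \<Sum>i<n. P i \<tau>)" for n using PP by (intro continuous_on_sum) auto
  have uc: "continuous_on {a..b} u"
    by (rule uniform_limit_theorem[OF _ ul]) (auto intro!: always_eventually Sc)
  have "u \<tau> = v + integral {a..\<tau>} (\<lambda>s. B s (u s))" if \<tau>: "\<tau> \<in> {a..b}" for \<tau>
  proof -
    have sub: "{a..\<tau>} \<subseteq> {a..b}" using \<tau> by auto
    have lim1: "(\<lambda>n. \<Sum>i<n. P i \<tau>) \<longlonglongrightarrow> u \<tau>" using tendsto_uniform_limitI[OF ul \<tau>] .
    have intP: "(\<lambda>s. B s (P i s)) integrable_on {a..\<tau>}" for i
      using PP cont by (intro integrable_continuous_real continuous_on_subset[OF _ sub]) blast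
    have eqn: "(\<Sum>i<Suc n. P i \<tau>) = v + integral {a..\<tau>} (\<lambda>s. B s (\<Sum>i<n. P i s))" for n
    proof -
      have "(\<Sum>i<Suc n. P i \<tau>) = P 0 \<tau> + (\<Sum>i<n. P (Suc i) \<tau>)" by (rule sum.lessThan_Suc_shift)
      also have "\<dots> = v + (\<Sum>i<n. integral {a..\<tau>} (\<lambda>s. B s (P i s)))" by (simp add: P0 PS)
      also have "(\<Sum>i<n. integral {a..\<tau>} (\<lambda>s. B s (P i s))) = integral {a..\<tau>} (\<lambda>s. \<Sum>i<n. B s (P i s))"
        by (rule Henstock_Kurzweil_Integration.integral_sum[symmetric]) (auto intro: intP)
      also have "(\<lambda>s. \<Sum>i<n. B s (P i s)) = (\<lambda>s. B s (\<Sum>i<n. P i s))"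
        by (intro ext) (rule linear_sum[OF lin, symmetric])
      finally show ?thesis .
    qed
    have ul2: "uniform_limit {a..\<tau>} (\<lambda>n s. B s (\<Sum>i<n. P i s)) (\<lambda>s. B s (u s)) sequentially"
      unfolding uniform_limit_iff
    proof (intro allI impI)
      fix e :: real assume e: "e > 0"
      have "\<forall>\<^sub>F n in sequentially. \<forall>s\<in>{a..b}. dist (\<Sum>i<n. P i s) (u s) < e / (L + 1)"
        using ul e L unfolding uniform_limit_iff by simp
      then show "\<forall>\<^sub>F n in sequentially. \<forall>s\<in>{a..\<tau>}. dist (B s (\<Sum>i<n. P i s)) (B s (u s)) < e"
      proof (rule eventually_mono)
        fix n assume h: "\<forall>s\<in>{a..b}. dist (\<Sum>i<n. P i s) (u s) < e / (L + 1)"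
        show "\<forall>s\<in>{a..\<tau>}. dist (B s (\<Sum>i<n. P i s)) (B s (u s)) < e"
        proof
          fix s assume s: "s \<in> {a..\<tau>}"
          have "dist (B s (\<Sum>i<n. P i s)) (B s (u s)) = norm (B s ((\<Sum>i<n. P i s) - u s))"
            by (simp add: dist_norm linear_diff[OF lin])
          also have "\<dots> \<le> L * norm ((\<Sum>i<n. P i s) - u s)" using bnd s sub by auto
          also have "\<dots> \<le> L * (e / (L + 1))"
          proof -
            have "s \<in> {a..b}" using s sub by auto
            then have "norm ((\<Sum>i<n. P i s) - u s) < e / (L + 1)" using h by (simp add: dist_norm)
            then show ?thesis using L by (intro mult_left_mono) auto
          qed
          also have "\<dots> < e" using e L by (simp add: field_simps)
          finally show "dist (B s (\<Sum>i<n. P i s)) (B s (u s)) < e" .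
        qed
      qed
    qed
    have cS: "continuous_on (cbox a \<tau>) (\<lambda>s. B s (\<Sum>i<n. P i s))" for n
      using cont[OF Sc] by (auto intro: continuous_on_subset[OF _ sub])
    obtain Iv J where Iv: "\<And>n. ((\<lambda>s. B s (\<Sum>i<n. P i s)) has_integral Iv n) (cbox a \<tau>)"
      and J: "((\<lambda>s. B s (u s)) has_integral J) (cbox a \<tau>)" and IJ: "Iv \<longlonglongrightarrow> J"
      using uniform_limit_integral_cbox[where a=a and b=\<tau> and f="\<lambda>n s. B s (\<Sum>i<n. P i s)" and g="\<lambda>s. B s (u s)" and F=sequentially] ul2 cS
      by auto
    have "(\<lambda>n. \<Sum>i<Suc n. P i \<tau>) \<longlonglongrightarrow> v + J"
    proof -
      have "integral {a..\<tau>} (\<lambda>s. B s (\<Sum>i<n. P i s)) = Iv n" for n using Iv[of n] by (simp add: integral_unique)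
      then show ?thesis unfolding eqn using IJ by (simp add: tendsto_add)
    qed
    moreover have "(\<lambda>n. \<Sum>i<Suc n. P i \<tau>) \<longlonglongrightarrow> u \<tau>"
      using LIMSEQ_Suc[OF lim1] .
    ultimately have "u \<tau> = v + J" using LIMSEQ_unique by blast
    then show ?thesis using J by (simp add: integral_unique)
  qed
  then show ?thesis using uc by blast
qed


context flowsetup begin

definition Kset :: "real \<Rightarrow> (real \<times> (real^3)) set" where
  "Kset r = {p. fst p \<in> I \<and> dist (snd p) (gam x (fst p)) \<le> r}"

lemma Kset_compact: "compact (Kset r)"
proof -
  have "Kset r = (\<lambda>p. (fst p, gam x (fst p) + snd p)) ` (I \<times> cball 0 r)"
  proof (intro set_eqI iffI)
    fix p assume "p \<in> Kset r"
    then have "(fst p, snd p - gam x (fst p)) \<in> I \<times> cball 0 r"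
      by (auto simp: Kset_def dist_norm norm_minus_commute)
    moreover have "p = (\<lambda>p. (fst p, gam x (fst p) + snd p)) (fst p, snd p - gam x (fst p))" by simp
    ultimately show "p \<in> (\<lambda>p. (fst p, gam x (fst p) + snd p)) ` (I \<times> cball 0 r)" by blast
  next
    fix p assume "p \<in> (\<lambda>p. (fst p, gam x (fst p) + snd p)) ` (I \<times> cball 0 r)"
    then show "p \<in> Kset r" by (auto simp: Kset_def dist_norm)
  qed
  moreover have "compact ((\<lambda>p. (fst p, gam x (fst p) + snd p)) ` (I \<times> cball 0 r))"
  proof (rule compact_continuous_image)
    show "compact (I \<times> cball (0::real^3) r)" by (intro compact_Times) auto
    have "continuous_on (I \<times> cball (0::real^3) r) (\<lambda>p. gam x (fst p))"
      using gam_cont[OF x_in] by (rule continuous_on_compose2) (auto intro: continuous_intros)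
    then show "continuous_on (I \<times> cball 0 r) (\<lambda>p. (fst p, gam x (fst p) + snd p))"
      by (intro continuous_intros) auto
  qed
  ultimately show ?thesis by simp
qed

lemma L_exists:
  assumes "\<forall>s\<in>I. \<forall>z. dist z (gam x s) \<le> r \<longrightarrow> (s, z) \<in> D"
  shows "\<exists>L>0. \<forall>s\<in>I. \<forall>z. dist z (gam x s) \<le> r \<longrightarrow> norm (F' (s, z)) \<le> L"
proof -
  have sub: "Kset r \<subseteq> D" using assms by (auto simp: Kset_def)
  have "compact (F' ` Kset r)"
    using compact_continuous_image[OF continuous_on_subset[OF F'_cont sub] Kset_compact] .
  then obtain B where B: "\<forall>q\<in>F' ` Kset r. norm q \<le> B" using compact_imp_bounded bounded_iff by metis
  show ?thesis
  proof (intro exI[of _ "max B 1"] conjI ballI allI impI)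
    fix s z assume "s \<in> I" "dist z (gam x s) \<le> r"
    then have "(s, z) \<in> Kset r" by (simp add: Kset_def)
    then show "norm (F' (s, z)) \<le> max B 1" using B by fastforce
  qed simp
qed

end

locale flow2 = flowsetup +
  fixes r L :: real
  assumes r_pos: "r > 0"
    and tube: "\<And>s z. s \<in> I \<Longrightarrow> dist z (gam x s) \<le> r \<Longrightarrow> (s, z) \<in> D"
    and L_pos: "L > 0"
    and L_bound: "\<And>s z. s \<in> I \<Longrightarrow> dist z (gam x s) \<le> r \<Longrightarrow> norm (F' (s, z)) \<le> L"
begin

definition A :: "real \<Rightarrow> real^3 \<Rightarrow> real^3" where "A s v = F' (s, gam x s) (0, v)"

lemma A_linear: "linear (A s)"
  unfolding A_def by (intro linearI) (auto simp: blinfun.add_right[symmetric] blinfun.scaleR_right[symmetric])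

lemma norm_Pair0: "norm ((0::real), v) = norm v"
  by (simp add: norm_Pair)

lemma F'_apply_bound: "s \<in> I \<Longrightarrow> dist z (gam x s) \<le> r \<Longrightarrow> norm (F' (s, z) (0, v)) \<le> L * norm v"
proof -
  assume h: "s \<in> I" "dist z (gam x s) \<le> r"
  have "norm (F' (s, z) (0, v)) \<le> norm (F' (s, z)) * norm ((0::real), v)" by (rule norm_blinfun)
  also have "\<dots> \<le> L * norm v" unfolding norm_Pair0 using L_bound[OF h] by (intro mult_right_mono) auto
  finally show ?thesis .
qed

lemma A_bound: "s \<in> I \<Longrightarrow> norm (A s v) \<le> L * norm v"
  unfolding A_def using r_pos by (intro F'_apply_bound) auto

lemma A_cont: "continuous_on I u \<Longrightarrow> continuous_on I (\<lambda>s. A s (u s))"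
proof -
  assume u: "continuous_on I u"
  have "continuous_on I (\<lambda>s. (s, gam x s))" using gam_cont[OF x_in] by (intro continuous_intros)
  moreover have "(\<lambda>s. (s, gam x s)) ` I \<subseteq> D" using tube r_pos by auto
  ultimately have "continuous_on I (F' \<circ> (\<lambda>s. (s, gam x s)))"
    using continuous_on_subset[OF F'_cont] continuous_on_compose by blast
  then have "continuous_on I (\<lambda>s. F' (s, gam x s))" by (simp add: o_def)
  then show ?thesis unfolding A_def using u by (intro continuous_intros) auto
qed

lemma lip:
  assumes s: "s \<in> I" and z: "dist z (gam x s) \<le> r"
  shows "norm (f s z - f s (gam x s)) \<le> L * norm (z - gam x s)"
proof (rule differentiable_bound[where S="cball (gam x s) r" and f'="\<lambda>z' v. F' (s, z') (0, v)"])
  show "convex (cball (gam x s) r)" by simp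
  fix z' assume z': "z' \<in> cball (gam x s) r"
  then have zd: "dist z' (gam x s) \<le> r" by (simp add: dist_commute)
  show "(f s has_derivative (\<lambda>v. F' (s, z') (0, v))) (at z' within cball (gam x s) r)"
    using f_pd[OF tube[OF s zd]] by (rule has_derivative_at_withinI)
  show "onorm (\<lambda>v. F' (s, z') (0, v)) \<le> L"
    using F'_apply_bound[OF s zd] by (intro onorm_le) auto
next
  show "z \<in> cball (gam x s) r" using z by (simp add: dist_commute)
  show "gam x s \<in> cball (gam x s) r" using r_pos by simp
qed

lemma linearization:
  assumes e: "e > 0"
  shows "\<exists>d>0. d \<le> r \<and> (\<forall>s\<in>I. \<forall>z. dist z (gam x s) \<le> d \<longrightarrow>
            norm (f s z - f s (gam x s) - A s (z - gam x s)) \<le> e * norm (z - gam x s))"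
proof -
  have sub: "Kset r \<subseteq> D" using tube by (auto simp: Kset_def)
  have "uniformly_continuous_on (Kset r) F'"
    using continuous_on_subset[OF F'_cont sub] Kset_compact by (rule compact_uniformly_continuous)
  then obtain d0 where d0: "d0 > 0" "\<And>p p'. p \<in> Kset r \<Longrightarrow> p' \<in> Kset r \<Longrightarrow> dist p' p < d0 \<Longrightarrow> dist (F' p') (F' p) < e"
    unfolding uniformly_continuous_on_def using e by metis
  define d where "d = min r (d0 / 2)"
  have dpos: "d > 0" "d \<le> r" "d < d0" using r_pos d0 by (auto simp: d_def)
  show ?thesis
  proof (intro exI[of _ d] conjI ballI allI impI)
    show "d > 0" "d \<le> r" using dpos by auto
    fix s z assume s: "s \<in> I" and z: "dist z (gam x s) \<le> d"
    define q where "q = gam x s"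
    have "norm (f s z - f s q - (\<lambda>v. F' (s, q) (0, v)) (z - q)) \<le> norm (z - q) * e"
    proof (rule differentiable_bound_linearization[where S="cball q d" and f'="\<lambda>z' v. F' (s, z') (0, v)"])
      fix t :: real assume t: "t \<in> {0..1}"
      have "dist q (q + t *\<^sub>R (z - q)) = t * norm (z - q)" using t by (simp add: dist_norm)
      also have "\<dots> \<le> 1 * norm (z - q)" using t by (intro mult_right_mono) auto
      finally show "q + t *\<^sub>R (z - q) \<in> cball q d" using z by (simp add: q_def dist_norm norm_minus_commute)
    next
      fix z' assume z': "z' \<in> cball q d"
      then have zd: "dist z' (gam x s) \<le> r" using dpos by (simp add: q_def dist_commute)
      show "(f s has_derivative (\<lambda>v. F' (s, z') (0, v))) (at z' within cball q d)"
        using f_pd[OF tube[OF s zd]] by (rule has_derivative_at_withinI)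
      have pK: "(s, z') \<in> Kset r" "(s, q) \<in> Kset r" using s zd r_pos by (auto simp: Kset_def q_def)
      have "dist (s, z') (s, q) < d0" using z' dpos by (simp add: dist_Pair_Pair dist_commute)
      then have dF: "norm (F' (s, z') - F' (s, q)) < e" using d0(2)[OF pK(2) pK(1)] by (simp add: dist_norm)
      show "onorm ((\<lambda>v. F' (s, z') (0, v)) - (\<lambda>v. F' (s, q) (0, v))) \<le> e"
      proof (rule onorm_le)
        fix v
        have "norm (((\<lambda>v. F' (s, z') (0, v)) - (\<lambda>v. F' (s, q) (0, v))) v) = norm ((F' (s, z') - F' (s, q)) (0, v))"
          by (simp add: blinfun.diff_left)
        also have "\<dots> \<le> norm (F' (s, z') - F' (s, q)) * norm ((0::real), v)" by (rule norm_blinfun)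
        also have "\<dots> \<le> e * norm v" unfolding norm_Pair0 using dF by (intro mult_right_mono) auto
        finally show "norm (((\<lambda>v. F' (s, z') (0, v)) - (\<lambda>v. F' (s, q) (0, v))) v) \<le> e * norm v" .
      qed
    next
      show "q \<in> cball q d" using dpos by simp
    qed
    then show "norm (f s z - f s (gam x s) - A s (z - gam x s)) \<le> e * norm (z - gam x s)"
      by (simp add: A_def q_def mult.commute)
  qed
qed

end


context flow2 begin

lemma gw:
  assumes y: "y \<in> X" and tau: "\<tau> \<in> I" and stay: "\<forall>s\<in>{t0..\<tau>}. norm (gam y s - gam x s) \<le> r"
  shows "norm (gam y \<tau> - gam x \<tau>) \<le> norm (y - x) * exp (L * (\<tau> - t0))"
proof -
  define e where "e s = norm (gam y s - gam x s)" for s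
  have sub: "{t0..\<tau>} \<subseteq> I" using tau by auto
  have ec: "continuous_on {t0..\<tau>} e" unfolding e_def
    using gam_cont[OF y] gam_cont[OF x_in] by (intro continuous_intros continuous_on_subset[OF _ sub]) auto
  show ?thesis unfolding e_def[symmetric]
  proof (rule gronwall[OF ec L_pos])
    show "\<tau> \<in> {t0..\<tau>}" using tau by simp
    fix t assume t: "t \<in> {t0..\<tau>}"
    have tI: "t \<in> I" using t sub by auto
    have subt: "{t0..t} \<subseteq> I" using tI by auto
    have iy: "(\<lambda>s. f s (gam y s)) integrable_on {t0..t}"
      using integrand_cont[OF y] by (intro integrable_continuous_real continuous_on_subset[OF _ subt])
    have ix: "(\<lambda>s. f s (gam x s)) integrable_on {t0..t}"
      using integrand_cont[OF x_in] by (intro integrable_continuous_real continuous_on_subset[OF _ subt])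
    have "gam y t - gam x t = (y - x) + integral {t0..t} (\<lambda>s. f s (gam y s) - f s (gam x s))"
      using int_eq[OF y tI] int_eq[OF x_in tI] integral_diff[OF iy ix] by simp
    then have "e t \<le> norm (y - x) + norm (integral {t0..t} (\<lambda>s. f s (gam y s) - f s (gam x s)))"
      unfolding e_def by (metis norm_triangle_ineq)
    also have "norm (integral {t0..t} (\<lambda>s. f s (gam y s) - f s (gam x s))) \<le> integral {t0..t} (\<lambda>s. L * e s)"
    proof (rule integral_norm_bound_integral)
      show "(\<lambda>s. f s (gam y s) - f s (gam x s)) integrable_on {t0..t}" using iy ix by (rule integrable_diff)
      show "(\<lambda>s. L * e s) integrable_on {t0..t}"
        using ec t by (intro integrable_continuous_real continuous_intros continuous_on_subset[OF ec]) auto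
      fix s assume s: "s \<in> {t0..t}"
      then have sI: "s \<in> I" "s \<in> {t0..\<tau>}" using subt t by auto
      have "dist (gam y s) (gam x s) \<le> r" using stay sI by (simp add: dist_norm)
      from lip[OF sI(1) this] show "norm (f s (gam y s) - f s (gam x s)) \<le> L * e s" by (simp add: e_def)
    qed
    also have "integral {t0..t} (\<lambda>s. L * e s) = L * integral {t0..t} e" by simp
    finally show "e t \<le> norm (y - x) + L * integral {t0..t} e" by simp
  qed
qed

lemma near:
  assumes y: "y \<in> X" and small: "norm (y - x) * exp (L * T) < r / 2"
  shows "\<forall>\<tau>\<in>I. norm (gam y \<tau> - gam x \<tau>) \<le> norm (y - x) * exp (L * (\<tau> - t0))"
proof -
  define e where "e s = norm (gam y s - gam x s)" for s
  have ec: "continuous_on I e" unfolding e_def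
    using gam_cont[OF y] gam_cont[OF x_in] by (intro continuous_intros) auto
  have bnd: "norm (y - x) * exp (L * (\<tau> - t0)) < r / 2" if "\<tau> \<in> I" for \<tau>
  proof -
    have "exp (L * (\<tau> - t0)) \<le> exp (L * T)" using that L_pos by (auto intro: mult_left_mono)
    then have "norm (y - x) * exp (L * (\<tau> - t0)) \<le> norm (y - x) * exp (L * T)" by (intro mult_left_mono) auto
    then show ?thesis using small by simp
  qed
  define S where "S = {\<tau> \<in> I. r / 2 \<le> e \<tau>}"
  have e0: "e t0 = norm (y - x)" using sol_init y x_in by (simp add: e_def gam_def)
  have yx: "norm (y - x) < r / 2"
  proof -
    have "norm (y - x) * 1 \<le> norm (y - x) * exp (L * T)" using L_pos T_pos by (intro mult_left_mono) auto
    then show ?thesis using small by simp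
  qed
  have Sempty: "S = {}"
  proof (rule ccontr)
    assume ne: "S \<noteq> {}"
    have cl: "closed S" unfolding S_def
      using continuous_on_closed_Collect_le[OF continuous_on_const ec, of "r/2"] by simp
    have bb: "bdd_below S" unfolding S_def by (rule bdd_belowI[of _ t0]) auto
    define ts where "ts = Inf S"
    have tsS: "ts \<in> S" unfolding ts_def using closed_contains_Inf[OF ne bb cl] .
    then have tsI: "ts \<in> I" and ets: "r / 2 \<le> e ts" by (auto simp: S_def)
    have below: "e s < r / 2" if "s \<in> I" "s < ts" for s
    proof (rule ccontr)
      assume "\<not> e s < r / 2"
      then have "s \<in> S" using that by (auto simp: S_def)
      then have "ts \<le> s" unfolding ts_def using bb by (rule cInf_lower)
      then show False using that by simp
    qed
    have tgt: "t0 < ts"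
    proof (rule ccontr)
      assume "\<not> t0 < ts"
      then have "ts = t0" using tsI by auto
      then show False using ets e0 yx by simp
    qed
    have ets2: "e ts \<le> r / 2"
    proof -
      have "(e \<longlongrightarrow> e ts) (at ts within I)" using ec tsI by (simp add: continuous_on_def)
      then have "(e \<longlongrightarrow> e ts) (at ts within {t0..ts})" by (rule tendsto_within_subset) (use tsI in auto)
      then have lim: "(e \<longlongrightarrow> e ts) (at_left ts)" using tgt by (simp add: at_within_Icc_at_left)
      have "eventually (\<lambda>s. s \<in> {t0<..<ts}) (at_left ts)" using tgt by (rule eventually_at_left_real)
      then have "eventually (\<lambda>s. e s \<le> r / 2) (at_left ts)"
        by (rule eventually_mono) (use below tsI in \<open>auto intro: less_imp_le\<close>)
      then show ?thesis using tendsto_upperbound[OF lim, of "r/2"] by simp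
    qed
    have "e ts \<le> norm (y - x) * exp (L * (ts - t0))"
      unfolding e_def
    proof (rule gw[OF y tsI])
      show "\<forall>s\<in>{t0..ts}. norm (gam y s - gam x s) \<le> r"
      proof
        fix s assume s: "s \<in> {t0..ts}"
        show "norm (gam y s - gam x s) \<le> r"
        proof (cases "s = ts")
          case True then show ?thesis using ets2 r_pos by (simp add: e_def)
        next
          case False
          then have "e s < r / 2" using s tsI by (intro below) auto
          then show ?thesis using r_pos by (simp add: e_def)
        qed
      qed
    qed
    then show False using bnd[OF tsI] ets by simp
  qed
  show ?thesis
  proof
    fix \<tau> assume tau: "\<tau> \<in> I"
    show "norm (gam y \<tau> - gam x \<tau>) \<le> norm (y - x) * exp (L * (\<tau> - t0))"
    proof (rule gw[OF y tau])
      show "\<forall>s\<in>{t0..\<tau>}. norm (gam y s - gam x s) \<le> r"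
      proof
        fix s assume s: "s \<in> {t0..\<tau>}"
        then have "s \<in> I" using tau by auto
        then have "e s < r / 2" using Sempty by (auto simp: S_def)
        then show "norm (gam y s - gam x s) \<le> r" using r_pos by (simp add: e_def)
      qed
    qed
  qed
qed

end


context flow2 begin

lemma U_exists: "\<exists>U. \<forall>i. continuous_on I (U i) \<and> (\<forall>\<tau>\<in>I. U i \<tau> = axis i 1 + integral {t0..\<tau>} (\<lambda>s. A s (U i s)))"
proof -
  have "\<forall>i. \<exists>u. continuous_on I u \<and> (\<forall>\<tau>\<in>I. u \<tau> = axis i 1 + integral {t0..\<tau>} (\<lambda>s. A s (u s)))"
  proof
    fix i :: 3
    show "\<exists>u. continuous_on I u \<and> (\<forall>\<tau>\<in>I. u \<tau> = axis i 1 + integral {t0..\<tau>} (\<lambda>s. A s (u s)))"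
      using T_pos L_pos by (intro lin_ode[where L=L] A_linear A_bound A_cont) auto
  qed
  then show ?thesis by (rule choice)
qed

definition U :: "3 \<Rightarrow> real \<Rightarrow> real^3" where
  "U = (SOME U. \<forall>i. continuous_on I (U i) \<and> (\<forall>\<tau>\<in>I. U i \<tau> = axis i 1 + integral {t0..\<tau>} (\<lambda>s. A s (U i s))))"

lemma U_props: "continuous_on I (U i)" "\<tau> \<in> I \<Longrightarrow> U i \<tau> = axis i 1 + integral {t0..\<tau>} (\<lambda>s. A s (U i s))"
  using someI_ex[OF U_exists] unfolding U_def[symmetric] by auto

definition Mv :: "real \<Rightarrow> real^3 \<Rightarrow> real^3" where
  "Mv \<tau> v = (\<Sum>i\<in>UNIV. (v $ i) *\<^sub>R U i \<tau>)"

lemma Mv_linear: "linear (Mv \<tau>)"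
  unfolding Mv_def by (intro linearI) (auto simp: scaleR_add_left sum.distrib scaleR_sum_right)

lemma Mv_cont: "continuous_on I (\<lambda>s. Mv s v)"
  unfolding Mv_def using U_props(1) by (intro continuous_intros) auto

lemma AU_int: "(\<lambda>s. A s (U i s)) integrable_on {t0..\<tau>}" if "\<tau> \<in> I"
proof -
  have "{t0..\<tau>} \<subseteq> I" using that by auto
  then show ?thesis by (intro integrable_continuous_real continuous_on_subset[OF A_cont[OF U_props(1)]])
qed

lemma Mv_int:
  assumes tau: "\<tau> \<in> I"
  shows "Mv \<tau> v = v + integral {t0..\<tau>} (\<lambda>s. A s (Mv s v))"
proof -
  have "Mv \<tau> v = (\<Sum>i\<in>UNIV. (v $ i) *\<^sub>R axis i 1) + (\<Sum>i\<in>UNIV. (v $ i) *\<^sub>R integral {t0..\<tau>} (\<lambda>s. A s (U i s)))"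
    unfolding Mv_def using U_props(2)[OF tau] by (simp add: scaleR_add_right sum.distrib)
  also have "(\<Sum>i\<in>UNIV. (v $ i) *\<^sub>R axis i 1) = v"
    using basis_expansion[of v] by (simp add: scalar_mult_eq_scaleR)
  also have "(\<Sum>i\<in>UNIV. (v $ i) *\<^sub>R integral {t0..\<tau>} (\<lambda>s. A s (U i s)))
      = (\<Sum>i\<in>UNIV. integral {t0..\<tau>} (\<lambda>s. (v $ i) *\<^sub>R A s (U i s)))"
    by simp
  also have "\<dots> = integral {t0..\<tau>} (\<lambda>s. \<Sum>i\<in>UNIV. (v $ i) *\<^sub>R A s (U i s))"
    by (rule Henstock_Kurzweil_Integration.integral_sum[symmetric]) (auto intro: integrable_cmul AU_int[OF tau])
  also have "(\<lambda>s. \<Sum>i\<in>UNIV. (v $ i) *\<^sub>R A s (U i s)) = (\<lambda>s. A s (Mv s v))"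
  proof
    fix s
    show "(\<Sum>i\<in>UNIV. (v $ i) *\<^sub>R A s (U i s)) = A s (Mv s v)"
      unfolding Mv_def linear_sum[OF A_linear] linear_cmul[OF A_linear] ..
  qed
  finally show ?thesis .
qed

end


context flow2 begin

lemma psi_deriv: "((\<lambda>y. gam y (t0+T)) has_derivative Mv (t0+T)) (at x)"
  unfolding has_derivative_at_alt
proof (intro conjI allI impI)
  show "bounded_linear (Mv (t0+T))" using Mv_linear linear_conv_bounded_linear by blast
  fix e :: real assume e: "e > 0"
  define E where "E = exp (L * T)"
  have Epos: "E > 0" unfolding E_def by simp
  define eps where "eps = e / (T * E * E)"
  have epos: "eps > 0" unfolding eps_def using e T_pos Epos by simp
  obtain del where del: "del > 0" "del \<le> r"
    and lin: "\<And>s z. s \<in> I \<Longrightarrow> dist z (gam x s) \<le> del \<Longrightarrow>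
            norm (f s z - f s (gam x s) - A s (z - gam x s)) \<le> eps * norm (z - gam x s)"
    using linearization[OF epos] by blast
  obtain rho where rho: "rho > 0" "ball x rho \<subseteq> X" using X_open x_in open_contains_ball by blast
  define d where "d = min rho (min (r / (2 * E)) (del / E))"
  have dpos: "d > 0" unfolding d_def using rho del r_pos Epos by simp
  show "\<exists>d>0. \<forall>y. norm (y - x) < d \<longrightarrow>
      norm (gam y (t0 + T) - gam x (t0 + T) - Mv (t0 + T) (y - x)) \<le> e * norm (y - x)"
  proof (intro exI[of _ d] conjI allI impI)
    show "d > 0" by fact
    fix y assume yd: "norm (y - x) < d"
    have y: "y \<in> X" using yd rho unfolding d_def by (auto simp: dist_norm norm_minus_commute)
    have ysmall: "norm (y - x) * E < r / 2"
    proof -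
      have "norm (y - x) < r / (2 * E)" using yd unfolding d_def by simp
      then show ?thesis using Epos by (simp add: field_simps)
    qed
    have ydel: "norm (y - x) * E \<le> del"
    proof -
      have "norm (y - x) < del / E" using yd unfolding d_def by simp
      then show ?thesis using Epos by (simp add: field_simps)
    qed
    have nearb: "norm (gam y s - gam x s) \<le> norm (y - x) * E" if "s \<in> I" for s
    proof -
      have "norm (gam y s - gam x s) \<le> norm (y - x) * exp (L * (s - t0))"
        using near[OF y] ysmall that unfolding E_def by blast
      also have "\<dots> \<le> norm (y - x) * E" unfolding E_def using that L_pos
        by (intro mult_left_mono) (auto intro: mult_left_mono)
      finally show ?thesis .
    qed
    define w where "w s = gam y s - gam x s - Mv s (y - x)" for s
    define h where "h s = f s (gam y s) - f s (gam x s) - A s (gam y s - gam x s)" for s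
    have contw: "continuous_on I w" unfolding w_def
      using gam_cont[OF y] gam_cont[OF x_in] Mv_cont by (intro continuous_intros) auto
    have conth: "continuous_on I h" unfolding h_def
      using integrand_cont[OF y] integrand_cont[OF x_in] A_cont gam_cont[OF y] gam_cont[OF x_in]
      by (intro continuous_intros A_cont) auto
    have hb: "norm (h s) \<le> eps * (norm (y - x) * E)" if "s \<in> I" for s
    proof -
      have "dist (gam y s) (gam x s) \<le> del" using nearb[OF that] ydel by (simp add: dist_norm)
      then have "norm (h s) \<le> eps * norm (gam y s - gam x s)" unfolding h_def using lin[OF that] by simp
      also have "\<dots> \<le> eps * (norm (y - x) * E)" using nearb[OF that] epos by (intro mult_left_mono) auto
      finally show ?thesis .
    qed
    have weq: "w t = integral {t0..t} h + integral {t0..t} (\<lambda>s. A s (w s))" if t: "t \<in> I" for t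
    proof -
      have subt: "{t0..t} \<subseteq> I" using t by auto
      have iy: "(\<lambda>s. f s (gam y s)) integrable_on {t0..t}"
        by (intro integrable_continuous_real continuous_on_subset[OF integrand_cont[OF y] subt])
      have ix: "(\<lambda>s. f s (gam x s)) integrable_on {t0..t}"
        by (intro integrable_continuous_real continuous_on_subset[OF integrand_cont[OF x_in] subt])
      have im: "(\<lambda>s. A s (Mv s (y - x))) integrable_on {t0..t}"
        by (intro integrable_continuous_real continuous_on_subset[OF A_cont[OF Mv_cont] subt])
      have ih: "h integrable_on {t0..t}"
        by (intro integrable_continuous_real continuous_on_subset[OF conth subt])
      have iw: "(\<lambda>s. A s (w s)) integrable_on {t0..t}"
        by (intro integrable_continuous_real continuous_on_subset[OF A_cont[OF contw] subt])
      have "w t = integral {t0..t} (\<lambda>s. f s (gam y s)) - integral {t0..t} (\<lambda>s. f s (gam x s))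
                 - integral {t0..t} (\<lambda>s. A s (Mv s (y - x)))"
        unfolding w_def using int_eq[OF y t] int_eq[OF x_in t] Mv_int[OF t, of "y - x"] by simp
      also have "\<dots> = integral {t0..t} (\<lambda>s. f s (gam y s) - f s (gam x s) - A s (Mv s (y - x)))"
        using iy ix im by (simp add: Henstock_Kurzweil_Integration.integral_diff integrable_diff)
      also have "(\<lambda>s. f s (gam y s) - f s (gam x s) - A s (Mv s (y - x))) = (\<lambda>s. h s + A s (w s))"
      proof
        fix s
        have "A s (w s) = A s (gam y s - gam x s) - A s (Mv s (y - x))"
          unfolding w_def by (simp add: linear_diff[OF A_linear])
        then show "f s (gam y s) - f s (gam x s) - A s (Mv s (y - x)) = h s + A s (w s)"
          unfolding h_def by simp
      qed
      also have "integral {t0..t} (\<lambda>s. h s + A s (w s)) = integral {t0..t} h + integral {t0..t} (\<lambda>s. A s (w s))"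
        using ih iw by (rule Henstock_Kurzweil_Integration.integral_add)
      finally show ?thesis .
    qed
    define nw where "nw s = norm (w s)" for s
    have cnw: "continuous_on I nw" unfolding nw_def using contw by (intro continuous_intros)
    have "nw (t0+T) \<le> (T * (eps * (norm (y - x) * E))) * exp (L * ((t0+T) - t0))"
    proof (rule gronwall[OF cnw L_pos])
      show "t0 + T \<in> I" using T_pos by simp
      fix t assume t: "t \<in> I"
      have subt: "{t0..t} \<subseteq> I" using t by auto
      have "nw t \<le> norm (integral {t0..t} h) + norm (integral {t0..t} (\<lambda>s. A s (w s)))"
        unfolding nw_def weq[OF t] by (rule norm_triangle_ineq)
      also have "norm (integral {t0..t} h) \<le> integral {t0..t} (\<lambda>s. eps * (norm (y - x) * E))"
        using subt hb by (intro integral_norm_bound_integral integrable_continuous_real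
            continuous_on_subset[OF conth subt]) auto
      also have "\<dots> = (t - t0) * (eps * (norm (y - x) * E))" using t by simp
      also have "\<dots> \<le> T * (eps * (norm (y - x) * E))" using t epos Epos by (intro mult_right_mono) auto
      also have "norm (integral {t0..t} (\<lambda>s. A s (w s))) \<le> integral {t0..t} (\<lambda>s. L * nw s)"
        using subt A_bound unfolding nw_def
        by (intro integral_norm_bound_integral integrable_continuous_real
            continuous_on_subset[OF A_cont[OF contw] subt] continuous_on_subset[OF _ subt] continuous_intros contw) auto
      also have "integral {t0..t} (\<lambda>s. L * nw s) = L * integral {t0..t} nw" by simp
      finally show "nw t \<le> T * (eps * (norm (y - x) * E)) + L * integral {t0..t} nw" by simp
    qed
    also have "(T * (eps * (norm (y - x) * E))) * exp (L * ((t0+T) - t0)) = e * norm (y - x)"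
      unfolding eps_def E_def using T_pos by (simp add: field_simps)
    finally show "norm (gam y (t0 + T) - gam x (t0 + T) - Mv (t0 + T) (y - x)) \<le> e * norm (y - x)"
      unfolding nw_def w_def .
  qed
qed

end


lemma liouville3:
  fixes c :: "3 \<Rightarrow> 3 \<Rightarrow> real \<Rightarrow> real" and a :: "3 \<Rightarrow> 3 \<Rightarrow> real"
  assumes d: "\<And>j k. (c j k has_real_derivative (a j 1 * c 1 k \<tau> + a j 2 * c 2 k \<tau> + a j 3 * c 3 k \<tau>)) (at \<tau> within S)"
  shows "((\<lambda>t. det (\<chi> j k. c j k t)) has_real_derivative
           ((a 1 1 + a 2 2 + a 3 3) * det (\<chi> j k. c j k \<tau>))) (at \<tau> within S)"
  unfolding det_3 vec_lambda_beta
  by (auto intro!: derivative_eq_intros d simp: algebra_simps)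

context flow2 begin

lemma U_deriv:
  assumes tau: "\<tau> \<in> I"
  shows "(U k has_vector_derivative A \<tau> (U k \<tau>)) (at \<tau> within I)"
proof -
  have "((\<lambda>t. axis k 1 + integral {t0..t} (\<lambda>s. A s (U k s))) has_vector_derivative A \<tau> (U k \<tau>)) (at \<tau> within I)"
    using integral_has_vector_derivative[OF A_cont[OF U_props(1)] tau]
    by (intro derivative_eq_intros) auto
  then show ?thesis
    by (rule has_vector_derivative_transform[OF tau, rotated]) (simp add: U_props(2))
qed

lemma Mv_axis: "Mv t (axis k 1) = U k t"
proof -
  have "Mv t (axis k 1) = (\<Sum>i\<in>UNIV. (if i = k then U i t else 0))"
    unfolding Mv_def by (intro sum.cong) (auto simp: axis_def)
  also have "\<dots> = U k t" by simp
  finally show ?thesis .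
qed

lemma matrix_Mv: "matrix (Mv t) = (\<chi> j k. U k t $ j)"
  unfolding matrix_def Mv_axis ..

lemma det_Mv:
  assumes inc: "\<And>s. s \<in> I \<Longrightarrow> trace (matrix (A s)) = 0"
  shows "det (matrix (Mv (t0+T))) = 1"
proof -
  define D where "D t = det (\<chi> j k. U k t $ j)" for t
  have D0: "((D has_real_derivative 0) (at \<tau> within I))" if tau: "\<tau> \<in> I" for \<tau>
  proof -
    define a where "a j l = matrix (A \<tau>) $ j $ l" for j l
    have comp: "((\<lambda>t. U k t $ j) has_real_derivative (a j 1 * U k \<tau> $ 1 + a j 2 * U k \<tau> $ 2 + a j 3 * U k \<tau> $ 3))
        (at \<tau> within I)" for j k
    proof -
      have "((\<lambda>t. U k t $ j) has_derivative (\<lambda>h. (h *\<^sub>R A \<tau> (U k \<tau>)) $ j)) (at \<tau> within I)"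
        using bounded_linear.has_derivative[OF bounded_linear_vec_nth U_deriv[OF tau, unfolded has_vector_derivative_def]] .
      moreover have "A \<tau> (U k \<tau>) $ j = a j 1 * U k \<tau> $ 1 + a j 2 * U k \<tau> $ 2 + a j 3 * U k \<tau> $ 3"
      proof -
        have "A \<tau> (U k \<tau>) = matrix (A \<tau>) *v U k \<tau>"
          using fun_cong[OF matrix_vector_mul(2)[OF A_linear, of \<tau>], of "U k \<tau>"] by simp
        then show ?thesis by (simp add: matrix_vector_mult_def sum_3 a_def)
      qed
      ultimately have "((\<lambda>t. U k t $ j) has_derivative (\<lambda>h. h * (a j 1 * U k \<tau> $ 1 + a j 2 * U k \<tau> $ 2 + a j 3 * U k \<tau> $ 3))) (at \<tau> within I)"
        by simp
      moreover have "(\<lambda>h. h * q) = (*) q" for q :: real by (rule ext) simp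
      ultimately show ?thesis unfolding has_field_derivative_def by simp
    qed
    have "(D has_real_derivative ((a 1 1 + a 2 2 + a 3 3) * D \<tau>)) (at \<tau> within I)"
      unfolding D_def using liouville3[where c="\<lambda>j k t. U k t $ j" and a=a] comp by blast
    moreover have "a 1 1 + a 2 2 + a 3 3 = 0" using inc[OF tau] by (simp add: trace_def sum_3 a_def)
    ultimately show ?thesis by simp
  qed
  obtain c0 where c0: "\<forall>t\<in>I. D t = c0"
    using has_field_derivative_zero_constant[of I D] D0 by auto
  have "D t0 = 1"
  proof -
    have "U k t0 = axis k 1" for k using U_props(2)[of t0 k] T_pos by simp
    then have "(\<chi> j k. U k t0 $ j) = (mat 1 :: real^3^3)" by (simp add: vec_eq_iff mat_def axis_def)
    then show ?thesis unfolding D_def by simp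
  qed
  moreover have "t0 \<in> I" "t0 + T \<in> I" using T_pos by auto
  ultimately have "D (t0+T) = 1" using c0 by metis
  then show ?thesis unfolding D_def matrix_Mv .
qed

end


context flowsetup begin

lemma flow_main:
  assumes incompressible: "\<forall>(t, y)\<in>D. trace (jacobian (f t) (at y)) = 0"
  shows "jacobian (\<lambda>y. phi (t0+T) t0 y) (at x)
           = mat 1 + T *\<^sub>R jacobian (\<lambda>y. (1 / T) *\<^sub>R integral {t0..t0+T} (\<lambda>\<tau>. f \<tau> (phi \<tau> t0 y))) (at x)"
    and "det (jacobian (\<lambda>y. phi (t0+T) t0 y) (at x)) = 1"
proof -
  obtain r where r: "r > 0" "\<forall>s\<in>I. \<forall>z. dist z (gam x s) \<le> r \<longrightarrow> (s, z) \<in> D"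
    using tube_exists by blast
  obtain L where L: "L > 0" "\<forall>s\<in>I. \<forall>z. dist z (gam x s) \<le> r \<longrightarrow> norm (F' (s, z)) \<le> L"
    using L_exists[OF r(2)] by blast
  interpret fl: flow2 f D phi X t0 T x F' r L
    using r L by unfold_locales auto
  have psi_eq: "(\<lambda>y. phi (t0+T) t0 y) = (\<lambda>y. gam y (t0+T))" by (simp add: gam_def)
  have pd: "((\<lambda>y. phi (t0+T) t0 y) has_derivative fl.Mv (t0+T)) (at x)"
    unfolding psi_eq by (rule fl.psi_deriv)
  have J: "jacobian (\<lambda>y. phi (t0+T) t0 y) (at x) = matrix (fl.Mv (t0+T))"
    unfolding jacobian_def using frechet_derivative_at[OF pd] by simp
  have inc: "trace (matrix (fl.A s)) = 0" if s: "s \<in> I" for s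
  proof -
    have sD: "(s, gam x s) \<in> D" using sol_dom x_in s by (simp add: gam_def)
    have "fl.A s = (\<lambda>v. F' (s, gam x s) (0, v))" by (rule ext) (simp add: fl.A_def)
    then have "fl.A s = frechet_derivative (f s) (at (gam x s))"
      using frechet_derivative_at[OF f_pd[OF sD]] by simp
    then have "matrix (fl.A s) = jacobian (f s) (at (gam x s))" by (simp add: jacobian_def)
    then show ?thesis using incompressible sD by auto
  qed
  show "det (jacobian (\<lambda>y. phi (t0+T) t0 y) (at x)) = 1"
    unfolding J using fl.det_Mv[OF inc] by simp
  define ft where "ft y = (1 / T) *\<^sub>R integral {t0..t0+T} (\<lambda>\<tau>. f \<tau> (phi \<tau> t0 y))" for y
  have fteq: "(1 / T) *\<^sub>R (phi (t0+T) t0 y - y) = ft y" if y: "y \<in> X" for y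
  proof -
    have "gam y (t0+T) = y + integral I (\<lambda>s. f s (gam y s))" using int_eq[OF y] T_pos by simp
    then show ?thesis unfolding ft_def by (simp add: gam_def)
  qed
  have fd: "(ft has_derivative (\<lambda>v. (1 / T) *\<^sub>R (fl.Mv (t0+T) v - v))) (at x)"
  proof (rule has_derivative_transform_within_open[OF _ X_open x_in fteq])
    show "((\<lambda>y. (1 / T) *\<^sub>R (phi (t0 + T) t0 y - y)) has_derivative (\<lambda>v. (1 / T) *\<^sub>R (fl.Mv (t0 + T) v - v))) (at x)"
      using pd by (auto intro!: derivative_eq_intros)
  qed
  have N: "jacobian ft (at x) = matrix (\<lambda>v. (1 / T) *\<^sub>R (fl.Mv (t0+T) v - v))"
    unfolding jacobian_def using frechet_derivative_at[OF fd] by simp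
  show "jacobian (\<lambda>y. phi (t0+T) t0 y) (at x)
           = mat 1 + T *\<^sub>R jacobian (\<lambda>y. (1 / T) *\<^sub>R integral {t0..t0+T} (\<lambda>\<tau>. f \<tau> (phi \<tau> t0 y))) (at x)"
    unfolding J ft_def[symmetric] N using T_pos
    by (simp add: vec_eq_iff matrix_def mat_def axis_def)
qed

end

theorem mainTheorem1:
  fixes f :: "real \<Rightarrow> real^3 \<Rightarrow> real^3"
    and D :: "(real \<times> (real^3)) set"
    and phi :: "real \<Rightarrow> real \<Rightarrow> real^3 \<Rightarrow> real^3"
    and X :: "(real^3) set"
    and t0 T :: real and x :: "real^3"
    and mu1 mu2 mu3 :: complex
  assumes D_open: "open D"
    and f_C3: "C3_on (\<lambda>(t, y). f t y) D"
    and incompressible: "\<forall>(t, y)\<in>D. trace (jacobian (f t) (at y)) = 0"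
    and T_pos: "T > 0"
    and X_open: "open X"
    and sol_init: "\<forall>y\<in>X. phi t0 t0 y = y"
    and sol_dom: "\<forall>y\<in>X. \<forall>\<tau>\<in>{t0..t0+T}. (\<tau>, phi \<tau> t0 y) \<in> D"
    and sol_ode: "\<forall>y\<in>X. \<forall>\<tau>\<in>{t0..t0+T}.
          ((\<lambda>s. phi s t0 y) has_vector_derivative f \<tau> (phi \<tau> t0 y)) (at \<tau> within {t0..t0+T})"
    and x_in: "x \<in> X"
    and mu: "charpoly (jacobian psi (at x))
               = [:-mu1, 1:] * [:-mu2, 1:] * [:-mu3, 1:]"
    and psi_def: "psi = (\<lambda>y. phi (t0 + T) t0 y)"
    and ftilde_def: "ftilde = (\<lambda>y. (1 / T) *\<^sub>R integral {t0..t0+T} (\<lambda>\<tau>. f \<tau> (phi \<tau> t0 y)))"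
    and N_def: "N = jacobian ftilde (at x)"
    and m_def: "m = minor_sum N"
    and d_def: "d = det N"
    and Sg_def: "Sg = d * T^3 / (8 - 2 * m * T^2 - 3 * d * T^3)"
    and Delta_def: "Delta = - 4 * d^4 * T^12 - 12 * d^3 * m * T^11 - 13 * d^2 * m^2 * T^10
                 - 6 * d * m^3 * T^9 + (18 * d^2 * m - m^4) * T^8 + 18 * d * m^2 * T^7
                 + (27 * d^2 + 4 * m^3) * T^6"
  shows
    "(8 - 2 * m * T^2 - 3 * d * T^3 = 0 \<longrightarrow>
        cplx_eigenvalue (jacobian psi (at x)) (-1)
        \<and> Im mu1 = 0 \<and> Im mu2 = 0 \<and> Im mu3 = 0
        \<and> \<not> mesohyperbolic psi x)
   \<and> (8 - 2 * m * T^2 - 3 * d * T^3 \<noteq> 0 \<longrightarrow>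
        (Sg > 0 \<longrightarrow> length (filter (\<lambda>z. cmod z < 1) [mu1, mu2, mu3]) = 2
                      \<and> length (filter (\<lambda>z. cmod z > 1) [mu1, mu2, mu3]) = 1)
      \<and> (Sg < 0 \<longrightarrow> length (filter (\<lambda>z. cmod z < 1) [mu1, mu2, mu3]) = 1
                      \<and> length (filter (\<lambda>z. cmod z > 1) [mu1, mu2, mu3]) = 2)
      \<and> (Sg = 0 \<longrightarrow> cplx_eigenvalue (jacobian psi (at x)) 1))
   \<and> (Delta < 0 \<longrightarrow> Im mu1 = 0 \<and> Im mu2 = 0 \<and> Im mu3 = 0
                    \<and> mu1 \<noteq> mu2 \<and> mu1 \<noteq> mu3 \<and> mu2 \<noteq> mu3)
   \<and> (Delta > 0 \<longrightarrow> (\<exists>r a b. {# r, a, b #} = {# mu1, mu2, mu3 #}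
                    \<and> Im r = 0 \<and> Im a \<noteq> 0 \<and> b = cnj a))
   \<and> (Delta = 0 \<longrightarrow> Im mu1 = 0 \<and> Im mu2 = 0 \<and> Im mu3 = 0
                    \<and> (mu1 = mu2 \<or> mu1 = mu3 \<or> mu2 = mu3))
   \<and> (mesohyperbolic psi x \<longleftrightarrow> d \<noteq> 0 \<and> 8 - 2 * m * T^2 - 3 * d * T^3 \<noteq> 0)"
proof -
  obtain F' where F'd: "\<forall>p\<in>D. ((\<lambda>(t, y). f t y) has_derivative blinfun_apply (F' p)) (at p)"
      and F'2: "C2_on F' D"
    using f_C3 unfolding C3_on_def by blast
  obtain F'' where F''d: "\<forall>p\<in>D. (F' has_derivative blinfun_apply (F'' p)) (at p)"
    using F'2 unfolding C2_on_def by blast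
  have F'c: "continuous_on D F'"
    using F''d by (meson continuous_at_imp_continuous_on has_derivative_continuous)
  interpret fs: flowsetup f D phi X t0 T x F'
    using D_open F'd F'c T_pos X_open sol_init sol_dom sol_ode x_in by unfold_locales auto
  have JN: "jacobian psi (at x) = mat 1 + T *\<^sub>R N"
    unfolding psi_def N_def ftilde_def using fs.flow_main(1)[OF incompressible] .
  have detJ: "det (jacobian psi (at x)) = 1"
    unfolding psi_def using fs.flow_main(2)[OF incompressible] .
  have mu': "charpoly (jacobian psi (at x)) = [:-mu1, 1:] * [:-mu2, 1:] * [:-mu3, 1:]" using mu .
  show ?thesis
    unfolding mesohyperbolic_def
    using alg_main[OF T_pos JN detJ mu' m_def d_def Sg_def Delta_def] .
qed

end
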